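(* Let $\mathscr{F}$ be a family of languages closed under rational transduction and Kleene closure, and let $S$ be a finitely generated completely simple semigroup. Then the following are equivalent: (i) the loop problem of $S$ (with respect to a finite semigroup choice of generators) belongs to $\mathscr{F}$; (ii) the loop problem of each maximal subgroup of $S$ (with respect to a finite choice of generators) belongs to $\mathscr{F}$; (iii) the word problem of each maximal subgroup of $S$ (with respect to a finite choice of monoid generators) belongs to $\mathscr{F}$.
   Context: Maps are written on the right. $X^*$, $X^+$: free monoid and free semigroup on $X$. A semigroup is completely simple if it has no proper ideals and has a primitive idempotent (idempotent $e$ such that every idempotent $f$ with $ef = fe = f$ equals $e$); maximal subgroups are subsemigroups that are groups under the inherited multiplication and contained in no larger such; in a finitely generated completely simple semigroup they are finitely generated. For a monoid $M$ and surjective morphism $\sigma : X^* \to M$ ($X$ finite), let $\overline{X} = \{\overline{x} : x \in X\}$ be new symbols, $\hat{X} = X \cup \overline{X}$; the loop automaton has vertex set $M$, for each $a \in M$, $x \in X$ an edge $a \to a(x\sigma)$ labelled $x$ and an edge $a(x\sigma) \to a$ labelled $\overline{x}$; the loop problem $L_\sigma(M) \subseteq \hat{X}^*$ is the set of labels of paths from the identity to the identity. For a semigroup $S$ and surjective $\sigma : X^+ \to S$, the loop problem of $S$ is the loop problem of $S^1$ ($S$ with a new identity adjoined even if one exists) with respect to the extension $X^* \to S^1$. The word problem of a group $G$ with respect to a surjective monoid morphism $\sigma : X^* \to G$ is $\{w \in X^* : w\sigma = 1\}$. A rational transduction is a relation $\rho \subseteq X^* \times Z^*$ ($X, Z$ finite)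 accepted by a finite directed graph with edges labelled in $X^* \times Z^*$, an initial vertex and terminal vertices (pairs labelling initial-to-terminal paths); the image of $L$ is $L\rho = \{v : (u,v)\in\rho, u \in L\}$. The Kleene closure of a language is the submonoid of the free monoid it generates. *)

theory Defs
  imports Main
begin

inductive tpath :: "(nat \<times> nat list \<times> nat list \<times> nat) set \<Rightarrow> nat \<Rightarrow> nat list \<Rightarrow> nat list \<Rightarrow> nat \<Rightarrow> bool"
  for E where
  tpath_nil: "tpath E q [] [] q"
| tpath_step: "(p, a, b, q) \<in> E \<Longrightarrow> tpath E q u v r \<Longrightarrow> tpath E p (a @ u) (b @ v) r"

definition rational_transduction :: "nat set \<Rightarrow> nat set \<Rightarrow> (nat list \<times> nat list) set \<Rightarrow> bool" where
  "rational_transduction X Z \<rho> \<longleftrightarrow>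
     (\<exists>E q0 T. finite E \<and> (\<forall>(p, a, b, q) \<in> E. set a \<subseteq> X \<and> set b \<subseteq> Z) \<and>
        \<rho> = {(u, v). \<exists>t \<in> T. tpath E q0 u v t})"

definition closed_rat_trans :: "nat list set set \<Rightarrow> bool" where
  "closed_rat_trans F \<longleftrightarrow>
     (\<forall>X Z L \<rho>. finite X \<and> finite Z \<and> L \<in> F \<and> L \<subseteq> lists X \<and> rational_transduction X Z \<rho>
        \<longrightarrow> \<rho> `` L \<in> F)"

definition kleene_star :: "nat list set \<Rightarrow> nat list set" where
  "kleene_star L = {concat ws | ws. set ws \<subseteq> L}"

definition closed_kleene :: "nat list set set \<Rightarrow> bool" where
  "closed_kleene F \<longleftrightarrow> (\<forall>L \<in> F. kleene_star L \<in> F)"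

definition mon_eval :: "('m \<Rightarrow> 'm \<Rightarrow> 'm) \<Rightarrow> 'm \<Rightarrow> (nat \<Rightarrow> 'm) \<Rightarrow> nat list \<Rightarrow> 'm" where
  "mon_eval mult one g w = foldr (\<lambda>x acc. mult (g x) acc) w one"

definition mon_generates :: "'m set \<Rightarrow> ('m \<Rightarrow> 'm \<Rightarrow> 'm) \<Rightarrow> 'm \<Rightarrow> nat set \<Rightarrow> (nat \<Rightarrow> 'm) \<Rightarrow> bool" where
  "mon_generates M mult one X g \<longleftrightarrow>
     finite X \<and> g ` X \<subseteq> M \<and> (\<forall>m \<in> M. \<exists>w. set w \<subseteq> X \<and> mon_eval mult one g w = m)"

text \<open>Loop automaton. Encoding of the alphabet \<open>X \<union> \<overline>X\<close>: the letter x is the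
symbol 2x and the letter \<overline>x is the symbol 2x+1.\<close>
inductive loop_path :: "'m set \<Rightarrow> ('m \<Rightarrow> 'm \<Rightarrow> 'm) \<Rightarrow> nat set \<Rightarrow> (nat \<Rightarrow> 'm) \<Rightarrow> 'm \<Rightarrow> nat list \<Rightarrow> 'm \<Rightarrow> bool"
  for M mult X g where
  lp_nil: "a \<in> M \<Longrightarrow> loop_path M mult X g a [] a"
| lp_fwd: "a \<in> M \<Longrightarrow> x \<in> X \<Longrightarrow> loop_path M mult X g (mult a (g x)) w b
            \<Longrightarrow> loop_path M mult X g a ((2 * x) # w) b"
| lp_bwd: "a \<in> M \<Longrightarrow> x \<in> X \<Longrightarrow> c \<in> M \<Longrightarrow> mult c (g x) = a \<Longrightarrow> loop_path M mult X g c w b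
            \<Longrightarrow> loop_path M mult X g a ((2 * x + 1) # w) b"

definition loop_problem :: "'m set \<Rightarrow> ('m \<Rightarrow> 'm \<Rightarrow> 'm) \<Rightarrow> 'm \<Rightarrow> nat set \<Rightarrow> (nat \<Rightarrow> 'm) \<Rightarrow> nat list set" where
  "loop_problem M mult one X g = {w. loop_path M mult X g one w one}"

definition word_problem :: "('m \<Rightarrow> 'm \<Rightarrow> 'm) \<Rightarrow> 'm \<Rightarrow> nat set \<Rightarrow> (nat \<Rightarrow> 'm) \<Rightarrow> nat list set" where
  "word_problem mult one X g = {w. set w \<subseteq> X \<and> mon_eval mult one g w = one}"

text \<open>S^1 = S with a new identity (None) adjoined.\<close>
fun adj_mult :: "'a::semigroup_mult option \<Rightarrow> 'a option \<Rightarrow> 'a option" where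
  "adj_mult None b = b"
| "adj_mult (Some a) None = Some a"
| "adj_mult (Some a) (Some b) = Some (a * b)"

definition sg_generates :: "nat set \<Rightarrow> (nat \<Rightarrow> 'a::semigroup_mult) \<Rightarrow> bool" where
  "sg_generates X g \<longleftrightarrow> finite X \<and>
     (\<forall>s::'a. \<exists>w. w \<noteq> [] \<and> set w \<subseteq> X \<and> mon_eval adj_mult None (Some \<circ> g) w = Some s)"

definition finitely_generated :: "'a::semigroup_mult itself \<Rightarrow> bool" where
  "finitely_generated T \<longleftrightarrow> (\<exists>X (g :: nat \<Rightarrow> 'a). sg_generates X g)"

definition sg_ideal :: "'a::semigroup_mult set \<Rightarrow> bool" where
  "sg_ideal I \<longleftrightarrow> I \<noteq> {} \<and> (\<forall>s i. i \<in> I \<longrightarrow> s * i \<in> I \<and> i * s \<in> I)"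

definition primitive_idempotent :: "'a::semigroup_mult \<Rightarrow> bool" where
  "primitive_idempotent e \<longleftrightarrow> e * e = e \<and>
     (\<forall>f. f * f = f \<and> e * f = f \<and> f * e = f \<longrightarrow> f = e)"

definition completely_simple :: "'a::semigroup_mult itself \<Rightarrow> bool" where
  "completely_simple T \<longleftrightarrow>
     (\<forall>I :: 'a set. sg_ideal I \<longrightarrow> I = UNIV) \<and> (\<exists>e :: 'a. primitive_idempotent e)"

definition is_subgroup :: "'a::semigroup_mult set \<Rightarrow> bool" where
  "is_subgroup H \<longleftrightarrow> (\<forall>a \<in> H. \<forall>b \<in> H. a * b \<in> H) \<and>
     (\<exists>e \<in> H. \<forall>h \<in> H. e * h = h \<and> h * e = h \<and> (\<exists>h' \<in> H. h * h' = e \<and> h' * h = e))"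

definition maximal_subgroup :: "'a::semigroup_mult set \<Rightarrow> bool" where
  "maximal_subgroup H \<longleftrightarrow> is_subgroup H \<and> (\<forall>K. is_subgroup K \<and> H \<subseteq> K \<longrightarrow> K = H)"

definition grp_one :: "'a::semigroup_mult set \<Rightarrow> 'a" where
  "grp_one H = (THE e. e \<in> H \<and> (\<forall>h \<in> H. e * h = h \<and> h * e = h))"

end

theory Submission
  imports Defs "HOL-Library.Nat_Bijection"
begin

lemma cs_simple:
  assumes "completely_simple TYPE('a::semigroup_mult)"
  shows "\<exists>x y. (b::'a) = x * a * y"
proof -
  let ?I = "{x * a * y | x y. True}"
  have "sg_ideal ?I" unfolding sg_ideal_def
  proof (intro conjI allI impI)
    show "?I \<noteq> {}" by blast
  next
    fix s i assume "i \<in> ?I"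
    then obtain x y where i: "i = x * a * y" by blast
    have "s * i = (s * x) * a * y" using i by (simp add: mult.assoc)
    then show "s * i \<in> ?I" by blast
    show "i * s \<in> ?I" using i by (auto simp: mult.assoc)
  qed
  with assms have "?I = UNIV" unfolding completely_simple_def by blast
  then show ?thesis by blast
qed

lemma cs_primitive:
  assumes cs: "completely_simple TYPE('a::semigroup_mult)"
    and f: "(f::'a) * f = f" and f': "f' * f' = f'" and "f * f' = f'" and "f' * f = f'"
  shows "f' = f"
proof -
  obtain e0 :: 'a where pe: "primitive_idempotent e0" using cs unfolding completely_simple_def by blast
  have e0: "e0 * e0 = e0" using pe unfolding primitive_idempotent_def by blast
  have prim: "\<And>k. k * k = k \<Longrightarrow> e0 * k = k \<Longrightarrow> k * e0 = k \<Longrightarrow> k = e0"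
    using pe unfolding primitive_idempotent_def by blast
  obtain u v where uv: "f = u * e0 * v" using cs_simple[OF cs] by blast
  define u' where "u' = f * u * e0"
  define v' where "v' = e0 * v * f"
  have e0l: "\<And>z. e0 * (e0 * z) = e0 * z" using e0 by (metis mult.assoc)
  have fl: "\<And>z. f * (f * z) = f * z" using f by (metis mult.assoc)
  have uv': "u' * v' = f"
    unfolding u'_def v'_def by (simp add: mult.assoc e0l) (metis uv f mult.assoc)
  have v'f: "v' * f = v'" unfolding v'_def using f by (simp add: mult.assoc)
  have u'e: "u' * e0 = u'" unfolding u'_def using e0 by (simp add: mult.assoc)
  have ev': "e0 * v' = v'" unfolding v'_def using e0l by (simp add: mult.assoc)
  have fu': "f * u' = u'" unfolding u'_def using fl by (simp add: mult.assoc)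
  have k1: "v' * u' = e0"
  proof (rule prim)
    show "v' * u' * (v' * u') = v' * u'" by (metis mult.assoc uv' v'f)
    show "e0 * (v' * u') = v' * u'" by (metis mult.assoc ev')
    show "v' * u' * e0 = v' * u'" by (metis mult.assoc u'e)
  qed
  have k2: "v' * f' * u' = e0"
  proof (rule prim)
    have "f' * f * f' = f'" using assms(4,5) f' by (metis mult.assoc)
    then show "v' * f' * u' * (v' * f' * u') = v' * f' * u'" by (metis mult.assoc uv')
    show "e0 * (v' * f' * u') = v' * f' * u'" by (metis mult.assoc ev')
    show "v' * f' * u' * e0 = v' * f' * u'" by (metis mult.assoc u'e)
  qed
  have "f = u' * e0 * v'" 
    by (metis k1 mult.assoc u'e uv' f)
  also have "\<dots> = u' * (v' * f' * u') * v'" using k2 by simp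
  also have "\<dots> = u' * v' * f' * (u' * v')" by (simp add: mult.assoc)
  also have "\<dots> = f'" using uv' assms(4,5) by (metis mult.assoc)
  finally show ?thesis by simp
qed

locale csi =
  fixes e :: "'a::semigroup_mult"
  assumes cs: "completely_simple TYPE('a)"
    and idem: "e * e = e"
begin

definition inH :: "'a \<Rightarrow> bool" where "inH x \<longleftrightarrow> e * x * e = x"

lemma eel: "e * (e * z) = e * z" using idem by (simp add: mult.assoc[symmetric])

lemma inH_l: assumes "inH a" shows "e * a = a"
proof -
  have "e * a = e * (e * a * e)" using assms unfolding inH_def by simp
  also have "\<dots> = e * a * e" by (simp add: mult.assoc eel)
  finally show ?thesis using assms unfolding inH_def by simp
qed
lemma inH_r: assumes "inH a" shows "a * e = a"
proof -
  have "a * e = (e * a * e) * e" using assms unfolding inH_def by simp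
  also have "\<dots> = e * a * e" by (simp add: mult.assoc idem)
  finally show ?thesis using assms unfolding inH_def by simp
qed
lemma inH_e: "inH e" unfolding inH_def using idem by simp
lemma inH_ese: "inH (e * s * e)" unfolding inH_def by (simp add: mult.assoc eel idem)
lemma inH_mult: assumes "inH a" "inH b" shows "inH (a * b)"
proof -
  have "e * (a * b) * e = (e * a) * (b * e)" by (simp add: mult.assoc)
  then show ?thesis unfolding inH_def using inH_l[OF assms(1)] inH_r[OF assms(2)] by simp
qed

lemma inv_ex: assumes "inH a" shows "\<exists>b. inH b \<and> a * b = e \<and> b * a = e"
proof -
  obtain x y where xy: "e = x * a * y" using cs_simple[OF cs] by blast
  define u where "u = e * x * e"
  define v where "v = e * y * e"
  have ea: "e * a = a" and ae: "a * e = a" using assms inH_l inH_r by auto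
  have "u * a * v = e * x * (e * a * e) * y * e" unfolding u_def v_def by (simp add: mult.assoc)
  also have "\<dots> = e * (x * a * y) * e" using ea ae by (simp add: mult.assoc)
  also have "\<dots> = e" using xy[symmetric] idem by (simp add: mult.assoc)
  finally have uav: "u * a * v = e" .
  have uav': "u * (a * (v * z)) = e * z" for z using uav by (simp add: mult.assoc[symmetric])
  have ve: "v * e = v" unfolding v_def by (simp add: mult.assoc idem)
  have ev: "e * v = v" unfolding v_def by (simp add: mult.assoc eel)
  have ue: "u * e = u" unfolding u_def by (simp add: mult.assoc idem)
  have ue': "u * (e * z) = u * z" for z using ue by (simp add: mult.assoc[symmetric])
  have eu: "e * u = u" unfolding u_def by (simp add: mult.assoc eel)
  have ea': "e * (a * z) = a * z" for z using ea by (simp add: mult.assoc[symmetric])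
  have ev': "e * (v * z) = v * z" for z using ev by (simp add: mult.assoc[symmetric])
  have ve': "v * (e * z) = v * z" for z using ve by (simp add: mult.assoc[symmetric])
  have 1: "a * v * u = e"
  proof (rule cs_primitive[OF cs idem])
    show "a * v * u * (a * v * u) = a * v * u" by (simp add: mult.assoc uav' ve')
    show "e * (a * v * u) = a * v * u" by (simp add: mult.assoc ea')
    show "a * v * u * e = a * v * u" by (simp add: mult.assoc ue)
  qed
  have 2: "v * u * a = e"
  proof (rule cs_primitive[OF cs idem])
    show "v * u * a * (v * u * a) = v * u * a" by (simp add: mult.assoc uav' ve')
    show "e * (v * u * a) = v * u * a" by (simp add: mult.assoc ev')
    show "v * u * a * e = v * u * a" by (simp add: mult.assoc ae)
  qed
  have "inH (v * u)" unfolding inH_def by (simp add: mult.assoc ev' ue)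
  then show ?thesis using 1 2 by (intro exI[of _ "v * u"]) (simp add: mult.assoc)
qed

definition inv :: "'a \<Rightarrow> 'a" where
  "inv a = (SOME b. inH b \<and> a * b = e \<and> b * a = e)"

lemma inv_props: assumes "inH a" shows "inH (inv a)" "a * inv a = e" "inv a * a = e"
  using someI_ex[OF inv_ex[OF assms]] unfolding inv_def by auto

lemma inv_unique: assumes "inH a" "inH b" "a * b = e" shows "b = inv a"
proof -
  have "b = e * b" using assms(2) inH_l by simp
  also have "\<dots> = inv a * a * b" using inv_props[OF assms(1)] by simp
  also have "\<dots> = inv a * e" using assms(3) by (simp add: mult.assoc)
  also have "\<dots> = inv a" using inv_props(1)[OF assms(1)] inH_r by simp
  finally show ?thesis .
qed

lemma inv_mult: assumes "inH a" "inH b" shows "inv (a * b) = inv b * inv a"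
proof -
  have "a * b * (inv b * inv a) = a * (b * inv b) * inv a" by (simp add: mult.assoc)
  also have "\<dots> = a * inv a" using inv_props(2)[OF assms(2)] inH_r[OF assms(1)] by simp
  also have "\<dots> = e" using inv_props(2)[OF assms(1)] .
  finally have "a * b * (inv b * inv a) = e" .
  moreover have "inH (inv b * inv a)" using inH_mult inv_props(1) assms by blast
  ultimately show ?thesis using inv_unique inH_mult assms by metis
qed

lemma inv_inv: "inH a \<Longrightarrow> inv (inv a) = a"
  using inv_unique[of "inv a" a] inv_props by metis

lemma inv_e: "inv e = e"
  using inv_unique[OF inH_e inH_e] idem by simp

lemma inv_el: "inH a \<Longrightarrow> e * inv a = inv a" using inv_props inH_l by blast
lemma inv_er: "inH a \<Longrightarrow> inv a * e = inv a" using inv_props inH_r by blast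

end

context csi begin

lemma zl: fixes a b c z :: 'a assumes "a * b = c" shows "a * (b * z) = c * z"
proof -
  have "a * (b * z) = (a * b) * z" by (simp add: mult.assoc)
  then show ?thesis using assms by simp
qed

definition rho :: "'a \<Rightarrow> 'a" where "rho s = s * inv (e * s * e)"
definition lam :: "'a \<Rightarrow> 'a" where "lam s = inv (e * s * e) * s"

lemma F1: "s * inv (e * s * e) * s = s"
proof -
  obtain x y where s: "s = x * e * y" using cs_simple[OF cs] by blast
  define A where "A = e * x * e"
  define B where "B = e * y * e"
  have hA: "inH A" and hB: "inH B" unfolding A_def B_def by (rule inH_ese)+
  have "e * s * e = A * B" unfolding A_def B_def s by (simp add: mult.assoc eel)
  then have k: "inv (e * s * e) = inv B * inv A" using inv_mult[OF hA hB] by simp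
  have 1: "e * (y * inv B) = e"
  proof -
    have "e * (y * inv B) = e * (y * (e * inv B))" using inv_el[OF hB] by simp
    also have "\<dots> = B * inv B" unfolding B_def by (simp add: mult.assoc)
    finally show ?thesis using inv_props(2)[OF hB] by simp
  qed
  have 2: "inv A * (x * e) = e"
  proof -
    have "inv A * (x * e) = (inv A * e) * (x * e)" using inv_er[OF hA] by simp
    also have "\<dots> = inv A * A" unfolding A_def by (simp add: mult.assoc)
    finally show ?thesis using inv_props(3)[OF hA] by simp
  qed
  have "s * inv (e * s * e) * s = s * (inv B * inv A) * s" using k by simp
  also have "\<dots> = x * (e * (y * inv B)) * (inv A * (x * e)) * y"
    unfolding s by (simp add: mult.assoc)
  also have "\<dots> = s" unfolding 1 2 s by (simp add: mult.assoc eel)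
  finally show ?thesis .
qed

lemma rho_e: "rho s * e = rho s" unfolding rho_def using inv_er[OF inH_ese, of s] by (simp add: mult.assoc)
lemma e_rho: "e * rho s = e"
proof -
  have "e * rho s = (e * s * e) * inv (e * s * e)" unfolding rho_def
    using inv_el[OF inH_ese, of s] by (simp add: mult.assoc)
  then show ?thesis using inv_props(2)[OF inH_ese] by simp
qed
lemma e_lam: "e * lam s = lam s" unfolding lam_def using inv_el[OF inH_ese] by (simp add: mult.assoc[symmetric])
lemma lam_e: "lam s * e = e"
proof -
  have "lam s * e = inv (e * s * e) * (e * s * e)" unfolding lam_def
    using zl[OF inv_er[OF inH_ese, of s]] by (simp add: mult.assoc)
  then show ?thesis using inv_props(3)[OF inH_ese] by simp
qed

lemma decomp: "rho s * (e * s * e) * lam s = s"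
proof -
  have "rho s * (e * s * e) * lam s = s * (inv (e*s*e) * (e * s * e)) * inv (e*s*e) * s"
    unfolding rho_def lam_def by (simp add: mult.assoc)
  also have "\<dots> = s * inv (e*s*e) * s" 
    using inv_props(3)[OF inH_ese, of s] inv_el[OF inH_ese, of s] by (simp add: mult.assoc)
  finally show ?thesis using F1 by simp
qed

lemma es_lam: "e * s = (e * s * e) * lam s" unfolding lam_def
  by (simp add: mult.assoc[symmetric] inv_props(2)[OF inH_ese])
lemma se_rho: "s * e = rho s * (e * s * e)" unfolding rho_def
proof -
  have "s * inv (e * s * e) * (e * s * e) = s * (inv (e * s * e) * (e * s * e))" by (simp add: mult.assoc)
  then show "s * e = s * inv (e * s * e) * (e * s * e)" using inv_props(3)[OF inH_ese, of s] by simp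
qed

lemma inH_P: "inH (lam s * rho t)" unfolding inH_def
  using zl[OF e_lam] rho_e by (simp add: mult.assoc)

lemma ee_mult: "e * (s * t) * e = (e * s * e) * (lam s * rho t) * (e * t * e)"
proof -
  have "e * (s * t) * e = (e * s) * (t * e)" by (simp add: mult.assoc)
  also have "\<dots> = ((e * s * e) * lam s) * (rho t * (e * t * e))"
    by (rule arg_cong2[where f="(*)"]) (rule es_lam, rule se_rho)
  finally show ?thesis by (simp add: mult.assoc)
qed

lemma coord_eq: assumes "rho s = rho t" "lam s = lam t" "e * s * e = e * t * e" shows "s = t"
proof -
  have "s = rho s * (e * s * e) * lam s" by (simp add: decomp)
  also have "\<dots> = rho t * (e * t * e) * lam t" using assms by simp
  also have "\<dots> = t" by (simp add: decomp)
  finally show ?thesis .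
qed

lemma rho_mult: "rho (s * t) = rho s"
proof -
  define P where "P = lam s * rho t"
  have hP: "inH P" unfolding P_def by (rule inH_P)
  have h: "e * (s * t) * e = (e * s * e) * P * (e * t * e)" unfolding P_def by (rule ee_mult)
  have ih: "inv (e * (s * t) * e) = inv (e*t*e) * inv P * inv (e*s*e)"
  proof -
    have "inv ((e * s * e) * P * (e * t * e)) = inv (e*t*e) * inv ((e * s * e) * P)"
      using inv_mult inH_mult inH_ese hP by blast
    also have "inv ((e * s * e) * P) = inv P * inv (e*s*e)" using inv_mult inH_ese hP by blast
    finally show ?thesis unfolding h by (simp add: mult.assoc)
  qed
  have tt: "t * inv (e*t*e) = rho t" unfolding rho_def ..
  have st: "s * rho t = rho s * (e * s * e) * P"
  proof -
    have "s * rho t = (rho s * (e * s * e) * lam s) * rho t" by (simp add: decomp)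
    then show ?thesis unfolding P_def by (simp add: mult.assoc)
  qed
  have "rho (s * t) = s * (t * inv (e*t*e)) * inv P * inv (e*s*e)"
    unfolding rho_def ih by (simp add: mult.assoc)
  also have "\<dots> = rho s * (e * s * e) * (P * inv P) * inv (e*s*e)"
    unfolding tt st by (simp add: mult.assoc)
  also have "\<dots> = rho s * ((e * s * e) * inv (e*s*e))"
    using inv_props[OF hP] inH_r[OF inH_ese] by (simp add: mult.assoc)
  also have "\<dots> = rho s" using inv_props(2)[OF inH_ese] rho_e by simp
  finally show ?thesis .
qed

lemma lam_mult: "lam (s * t) = lam t"
proof -
  define P where "P = lam s * rho t"
  have hP: "inH P" unfolding P_def by (rule inH_P)
  have h: "e * (s * t) * e = (e * s * e) * P * (e * t * e)" unfolding P_def by (rule ee_mult)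
  have ih: "inv (e * (s * t) * e) = inv (e*t*e) * inv P * inv (e*s*e)"
  proof -
    have "inv ((e * s * e) * P * (e * t * e)) = inv (e*t*e) * inv ((e * s * e) * P)"
      using inv_mult inH_mult inH_ese hP by blast
    also have "inv ((e * s * e) * P) = inv P * inv (e*s*e)" using inv_mult inH_ese hP by blast
    finally show ?thesis unfolding h by (simp add: mult.assoc)
  qed
  have ss: "inv (e*s*e) * s = lam s" unfolding lam_def ..
  have st: "lam s * t = P * (e * t * e) * lam t"
  proof -
    have "lam s * t = lam s * (rho t * (e * t * e) * lam t)" by (simp add: decomp)
    then show ?thesis unfolding P_def by (simp add: mult.assoc)
  qed
  have "lam (s * t) = inv (e*t*e) * inv P * (lam s * t)"
    unfolding lam_def ih by (simp add: mult.assoc)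
  also have "\<dots> = inv (e*t*e) * (inv P * P) * (e * t * e) * lam t"
    unfolding st by (simp add: mult.assoc)
  also have "\<dots> = (inv (e*t*e) * (e * t * e)) * lam t"
    using inv_props[OF hP] inv_er[OF inH_ese] by (simp add: mult.assoc)
  also have "\<dots> = lam t" using inv_props(3)[OF inH_ese] e_lam by simp
  finally show ?thesis .
qed

end

definition codes :: "nat set \<Rightarrow> nat set" where
  "codes Z = (\<lambda>z. 2*z) ` Z \<union> (\<lambda>z. 2*z+1) ` Z"

lemma finite_codes: "finite Z \<Longrightarrow> finite (codes Z)" unfolding codes_def by simp

lemma codes_fwd[simp]: "2 * z \<in> codes Z \<longleftrightarrow> z \<in> Z" unfolding codes_def by (auto; presburger)
lemma codes_bwd[simp]: "Suc (2 * z) \<in> codes Z \<longleftrightarrow> z \<in> Z" unfolding codes_def by (auto; presburger)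

lemma loop_path_codes: "loop_path M mult X g a w b \<Longrightarrow> set w \<subseteq> codes X"
  by (induction rule: loop_path.induct) auto

lemma loop_path_in: "loop_path M mult X g a w b \<Longrightarrow> a \<in> M \<and> b \<in> M"
  by (induction rule: loop_path.induct) auto

lemma loop_path_trans:
  "loop_path M mult X g a u b \<Longrightarrow> loop_path M mult X g b v c \<Longrightarrow> loop_path M mult X g a (u @ v) c"
proof (induction rule: loop_path.induct)
  case (lp_nil a)
  then show ?case by simp
next
  case (lp_fwd a x w b)
  then show ?case by (auto intro: loop_path.lp_fwd)
next
  case (lp_bwd a x c' w b)
  then show ?case using loop_path.lp_bwd[where a=a and x=x and c=c' and w="w @ v" and b=c and M=M and mult=mult and X=X and g=g] by simp
qed

lemma loop_path_split:
  "loop_path M mult X g a (u @ v) c \<Longrightarrow> \<exists>b. loop_path M mult X g a u b \<and> loop_path M mult X g b v c"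
proof (induction u arbitrary: a)
  case Nil
  then have "a \<in> M" using loop_path_in by fastforce
  then have "loop_path M mult X g a [] a" by (rule loop_path.lp_nil)
  then show ?case using Nil by auto
next
  case (Cons x u)
  from Cons.prems show ?case
  proof (cases rule: loop_path.cases)
    case (lp_fwd y w')
    then have xw: "x = 2 * y" "w' = u @ v" by auto
    obtain b where "loop_path M mult X g (mult a (g y)) u b" "loop_path M mult X g b v c"
      using Cons.IH[of "mult a (g y)"] lp_fwd xw by auto
    then show ?thesis using lp_fwd xw loop_path.lp_fwd[where a=a and x=y and w=u and b=b and M=M and mult=mult and X=X and g=g] by auto
  next
    case (lp_bwd y c' w')
    then have xw: "x = Suc (2 * y)" "w' = u @ v" by auto
    obtain b where "loop_path M mult X g c' u b" "loop_path M mult X g b v c"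
      using Cons.IH[of c'] lp_bwd xw by auto
    then show ?thesis using lp_bwd xw loop_path.lp_bwd[where a=a and x=y and c=c' and w=u and b=b and M=M and mult=mult and X=X and g=g] by auto
  qed simp
qed

lemma tpath_one:
  "tpath {(q, A z, B z, q) | z. z \<in> Zs} p u v r \<longleftrightarrow>
     p = q \<and> r = q \<and> (\<exists>zs. set zs \<subseteq> Zs \<and> u = concat (map A zs) \<and> v = concat (map B zs))
   \<or> (p = r \<and> u = [] \<and> v = [])"
proof
  assume "tpath {(q, A z, B z, q) | z. z \<in> Zs} p u v r"
  then show "p = q \<and> r = q \<and> (\<exists>zs. set zs \<subseteq> Zs \<and> u = concat (map A zs) \<and> v = concat (map B zs))
   \<or> (p = r \<and> u = [] \<and> v = [])"
  proof (induction rule: tpath.induct)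
    case (tpath_nil q)
    then show ?case by auto
  next
    case (tpath_step p a b q' u v r)
    then obtain z where z: "z \<in> Zs" "p = q" "q' = q" "a = A z" "b = B z" by auto
    from tpath_step.IH show ?case
    proof (elim disjE)
      assume "q' = q \<and> r = q \<and> (\<exists>zs. set zs \<subseteq> Zs \<and> u = concat (map A zs) \<and> v = concat (map B zs))"
      then obtain zs where "set zs \<subseteq> Zs" "u = concat (map A zs)" "v = concat (map B zs)" "r = q" by blast
      then show ?thesis using z by (intro disjI1) (auto intro!: exI[of _ "z # zs"])
    next
      assume "q' = r \<and> u = [] \<and> v = []"
      then show ?thesis using z by (intro disjI1) (auto intro!: exI[of _ "[z]"])
    qed
  qed
next
  assume "p = q \<and> r = q \<and> (\<exists>zs. set zs \<subseteq> Zs \<and> u = concat (map A zs) \<and> v = concat (map B zs))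
   \<or> (p = r \<and> u = [] \<and> v = [])"
  then show "tpath {(q, A z, B z, q) | z. z \<in> Zs} p u v r"
  proof
    assume "p = r \<and> u = [] \<and> v = []"
    then show ?thesis by (auto intro: tpath.intros)
  next
    assume "p = q \<and> r = q \<and> (\<exists>zs. set zs \<subseteq> Zs \<and> u = concat (map A zs) \<and> v = concat (map B zs))"
    then obtain zs where zs: "p = q" "r = q" "set zs \<subseteq> Zs" "u = concat (map A zs)" "v = concat (map B zs)" by blast
    have "set zs \<subseteq> Zs \<Longrightarrow> tpath {(q, A z, B z, q) | z. z \<in> Zs} q (concat (map A zs)) (concat (map B zs)) q" for zs
      by (induction zs) (auto intro: tpath.intros)
    then show ?thesis using zs by simp
  qed
qed

lemma tpath_one_q:
  "tpath {(q, A z, B z, q) | z. z \<in> Zs} q u v q \<longleftrightarrow>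
     (\<exists>zs. set zs \<subseteq> Zs \<and> u = concat (map A zs) \<and> v = concat (map B zs))"
proof
  assume "tpath {(q, A z, B z, q) | z. z \<in> Zs} q u v q"
  then have "(\<exists>zs. set zs \<subseteq> Zs \<and> u = concat (map A zs) \<and> v = concat (map B zs)) \<or> (u = [] \<and> v = [])"
    unfolding tpath_one by blast
  then show "\<exists>zs. set zs \<subseteq> Zs \<and> u = concat (map A zs) \<and> v = concat (map B zs)"
  proof (elim disjE)
    assume "u = [] \<and> v = []" then show ?thesis by (intro exI[of _ "[]"]) simp
  qed
next
  assume "\<exists>zs. set zs \<subseteq> Zs \<and> u = concat (map A zs) \<and> v = concat (map B zs)"
  then show "tpath {(q, A z, B z, q) | z. z \<in> Zs} q u v q" unfolding tpath_one by blast
qed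

lemma rat_one:
  assumes "finite Zs" "\<And>z. z \<in> Zs \<Longrightarrow> set (A z) \<subseteq> X \<and> set (B z) \<subseteq> Y"
  shows "rational_transduction X Y {(u, v). \<exists>zs. set zs \<subseteq> Zs \<and> u = concat (map A zs) \<and> v = concat (map B zs)}"
  unfolding rational_transduction_def
proof (intro exI conjI)
  let ?E = "{((0::nat), A z, B z, (0::nat)) | z. z \<in> Zs}"
  have "?E = (\<lambda>z. (0, A z, B z, 0)) ` Zs" by auto
  then show "finite ?E" using assms(1) by simp
  show "\<forall>(p, a, b, q) \<in> ?E. set a \<subseteq> X \<and> set b \<subseteq> Y" using assms(2) by auto
  show "{(u, v). \<exists>zs. set zs \<subseteq> Zs \<and> u = concat (map A zs) \<and> v = concat (map B zs)} =
    {(u, v). \<exists>t \<in> {0}. tpath ?E 0 u v t}" by (simp add: tpath_one_q)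
qed

lemma codes_div: "c \<in> codes Z \<Longrightarrow> c div 2 \<in> Z" unfolding codes_def by auto

lemma codes_cases: assumes "c \<in> codes Z"
  obtains x where "x \<in> Z" "c = 2 * x" | x where "x \<in> Z" "c = Suc (2 * x)"
  using assms unfolding codes_def by auto

lemma apply_crt: "closed_rat_trans F \<Longrightarrow> finite X \<Longrightarrow> finite Y \<Longrightarrow> L \<in> F \<Longrightarrow> L \<subseteq> lists X
   \<Longrightarrow> rational_transduction X Y \<rho> \<Longrightarrow> \<rho> `` L \<in> F"
  unfolding closed_rat_trans_def by blast

context csi begin

definition gev :: "(nat \<Rightarrow> 'a) \<Rightarrow> nat list \<Rightarrow> 'a" where
  "gev hg w = foldr (\<lambda>c acc. (if even c then hg (c div 2) else inv (hg (c div 2))) * acc) w e"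

lemma gev_simps[simp]: "gev hg [] = e"
  "gev hg (c # w) = (if even c then hg (c div 2) else inv (hg (c div 2))) * gev hg w"
  unfolding gev_def by simp_all

lemma gev_inH: "set w \<subseteq> codes Z \<Longrightarrow> \<forall>z\<in>Z. inH (hg z) \<Longrightarrow> inH (gev hg w)"
proof (induction w)
  case Nil then show ?case using inH_e by simp
next
  case (Cons c w)
  then have c: "c div 2 \<in> Z" using codes_div by auto
  then have h: "inH (hg (c div 2))" using Cons.prems(2) by blast
  have i: "inH (gev hg w)" using Cons by simp
  show ?case using inH_mult[OF h i] inH_mult[OF inv_props(1)[OF h] i] by simp
qed

lemma GL:
  assumes gen: "\<forall>z\<in>Z. inH (hg z)"
  shows "loop_path (Collect inH) (*) Z hg a w b \<longleftrightarrow> inH a \<and> set w \<subseteq> codes Z \<and> b = a * gev hg w"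
proof
  assume "loop_path (Collect inH) (*) Z hg a w b"
  then show "inH a \<and> set w \<subseteq> codes Z \<and> b = a * gev hg w"
  proof (induction rule: loop_path.induct)
    case (lp_nil a)
    then show ?case using inH_r by simp
  next
    case (lp_fwd a x w b)
    then show ?case by (simp add: mult.assoc)
  next
    case (lp_bwd a x c w b)
    have "a = c * hg x" using lp_bwd by simp
    then have "a * (inv (hg x) * gev hg w) = c * (hg x * inv (hg x)) * gev hg w"
      by (simp add: mult.assoc)
    also have "\<dots> = c * gev hg w" using inv_props(2) gen lp_bwd inH_r by simp
    finally show ?case using lp_bwd by simp
  qed
next
  assume "inH a \<and> set w \<subseteq> codes Z \<and> b = a * gev hg w"
  then show "loop_path (Collect inH) (*) Z hg a w b"
  proof (induction w arbitrary: a)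
    case Nil
    then show ?case using inH_r by (auto intro: loop_path.lp_nil)
  next
    case (Cons c w)
    then have c: "c \<in> codes Z" and w: "set w \<subseteq> codes Z" by auto
    from c show ?case
    proof (cases rule: codes_cases)
      case (1 x)
      have ah: "inH (a * hg x)" using Cons.prems inH_mult gen 1 by auto
      have b: "b = (a * hg x) * gev hg w" using Cons.prems 1 by (simp add: mult.assoc)
      have "loop_path (Collect inH) (*) Z hg (a * hg x) w b"
        using Cons.IH[of "a * hg x"] ah w b by blast
      then show ?thesis
        using loop_path.lp_fwd[where a=a and x=x and w=w and b=b and M="Collect inH" and mult="(*)" and X=Z and g=hg]
          1 Cons.prems by simp
    next
      case (2 x)
      have hx: "inH (hg x)" using gen 2 by auto
      have ax: "inH (a * inv (hg x))" using Cons.prems inH_mult inv_props(1)[OF hx] by auto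
      have b: "b = (a * inv (hg x)) * gev hg w" using Cons.prems 2 by (simp add: mult.assoc)
      have "loop_path (Collect inH) (*) Z hg (a * inv (hg x)) w b"
        using Cons.IH[of "a * inv (hg x)"] ax w b by blast
      moreover have "a * inv (hg x) * hg x = a"
        using inv_props(3)[OF hx] Cons.prems inH_r by (simp add: mult.assoc)
      ultimately show ?thesis using 2 Cons.prems ax
        loop_path.lp_bwd[where a=a and x=x and c="a * inv (hg x)" and M="Collect inH" and w=w and b=b and mult="(*)" and X=Z and g=hg] by simp
    qed
  qed
qed

lemma LP_char:
  assumes gen: "\<forall>z\<in>Z. inH (hg z)"
  shows "loop_problem (Collect inH) (*) e Z hg = {w. set w \<subseteq> codes Z \<and> gev hg w = e}"
  unfolding loop_problem_def GL[OF gen] using inH_e gev_inH[OF _ gen] inH_l by auto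

abbreviation mev :: "(nat \<Rightarrow> 'a) \<Rightarrow> nat list \<Rightarrow> 'a" where "mev hg w \<equiv> mon_eval (*) e hg w"

lemma mev_simps[simp]: "mev hg [] = e" "mev hg (x # w) = hg x * mev hg w"
  unfolding mon_eval_def by simp_all

lemma mev_inH: "set w \<subseteq> Z \<Longrightarrow> \<forall>z\<in>Z. inH (hg z) \<Longrightarrow> inH (mev hg w)"
  by (induction w) (auto simp: inH_e inH_mult)

lemma mev_append: "set u \<subseteq> Z \<Longrightarrow> set v \<subseteq> Z \<Longrightarrow> \<forall>z\<in>Z. inH (hg z) \<Longrightarrow>
    mev hg (u @ v) = mev hg u * mev hg v"
  by (induction u) (auto simp: mult.assoc inH_l mev_inH)

lemma mev_gev: "gev hg (map (\<lambda>z. 2 * z) zs) = mev hg zs"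
  by (induction zs) auto

lemma ii_iii:
  assumes F: "closed_rat_trans F" and mg: "mon_generates (Collect inH) (*) e Z hg"
  shows "loop_problem (Collect inH) (*) e Z hg \<in> F \<longleftrightarrow> word_problem (*) e Z hg \<in> F"
proof -
  have fin: "finite Z" and gen: "\<forall>z\<in>Z. inH (hg z)"
    and surj: "\<And>m. inH m \<Longrightarrow> \<exists>w. set w \<subseteq> Z \<and> mev hg w = m"
    using mg unfolding mon_generates_def by auto
  have LP: "loop_problem (Collect inH) (*) e Z hg = {w. set w \<subseteq> codes Z \<and> gev hg w = e}"
    by (rule LP_char[OF gen])
  have WP: "word_problem (*) e Z hg = {w. set w \<subseteq> Z \<and> mev hg w = e}"
    unfolding word_problem_def ..
  show ?thesis
  proof
    assume L: "loop_problem (Collect inH) (*) e Z hg \<in> F"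
    let ?\<rho> = "{(u, v). \<exists>zs. set zs \<subseteq> Z \<and> u = concat (map (\<lambda>z. [2 * z]) zs) \<and> v = concat (map (\<lambda>z. [z]) zs)}"
    have rt: "rational_transduction (codes Z) Z ?\<rho>" by (rule rat_one) (auto simp: fin)
    have sub: "loop_problem (Collect inH) (*) e Z hg \<subseteq> lists (codes Z)" unfolding LP by auto
    have cm: "concat (map (\<lambda>z. [2 * z]) zs) = map (\<lambda>z. 2 * z) zs" for zs :: "nat list" by (induction zs) auto
    have cm2: "concat (map (\<lambda>z. [z]) zs) = zs" for zs :: "nat list" by (induction zs) auto
    have "?\<rho> `` loop_problem (Collect inH) (*) e Z hg = word_problem (*) e Z hg"
    proof (rule set_eqI)
      fix v
      show "v \<in> ?\<rho> `` loop_problem (Collect inH) (*) e Z hg \<longleftrightarrow> v \<in> word_problem (*) e Z hg"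
      proof
        assume "v \<in> ?\<rho> `` loop_problem (Collect inH) (*) e Z hg"
        then obtain u zs where u: "u \<in> loop_problem (Collect inH) (*) e Z hg" and zs: "set zs \<subseteq> Z"
          "u = concat (map (\<lambda>z. [2 * z]) zs)" "v = concat (map (\<lambda>z. [z]) zs)" by blast
        then have "v = zs" "u = map (\<lambda>z. 2 * z) zs" using cm cm2 by auto
        then show "v \<in> word_problem (*) e Z hg" using u zs(1) mev_gev unfolding LP WP by auto
      next
        assume "v \<in> word_problem (*) e Z hg"
        then have v: "set v \<subseteq> Z" "mev hg v = e" unfolding WP by auto
        have "map (\<lambda>z. 2 * z) v \<in> loop_problem (Collect inH) (*) e Z hg"
          unfolding LP using v mev_gev[of hg v] by auto
        moreover have "(map (\<lambda>z. 2 * z) v, v) \<in> ?\<rho>" using v cm cm2 by auto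
        ultimately show "v \<in> ?\<rho> `` loop_problem (Collect inH) (*) e Z hg" by blast
      qed
    qed
    then show "word_problem (*) e Z hg \<in> F"
      using apply_crt[OF F finite_codes[OF fin] fin L sub rt] by simp
  next
    assume W: "word_problem (*) e Z hg \<in> F"
    define W where "W x = (SOME w. set w \<subseteq> Z \<and> mev hg w = inv (hg x))" for x
    have Wp: "set (W x) \<subseteq> Z \<and> mev hg (W x) = inv (hg x)" if "x \<in> Z" for x
      unfolding W_def by (rule someI_ex) (use surj inv_props(1) gen that in blast)
    define A where "A c = (if even c then [c div 2] else W (c div 2))" for c
    let ?\<rho> = "{(u, v). \<exists>cs. set cs \<subseteq> codes Z \<and> u = concat (map A cs) \<and> v = concat (map (\<lambda>c. [c]) cs)}"
    have rt: "rational_transduction Z (codes Z) ?\<rho>"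
      by (rule rat_one) (auto simp: fin finite_codes A_def codes_div dest: Wp[OF codes_div])
    have sub: "word_problem (*) e Z hg \<subseteq> lists Z" unfolding WP by auto
    have cm2: "concat (map (\<lambda>z. [z]) zs) = zs" for zs :: "nat list" by (induction zs) auto
    have AZ: "set (concat (map A cs)) \<subseteq> Z" if "set cs \<subseteq> codes Z" for cs
      using that by (induction cs) (auto simp: A_def codes_div dest: Wp[OF codes_div])
    have Aev: "mev hg (concat (map A cs)) = gev hg cs" if "set cs \<subseteq> codes Z" for cs
      using that
    proof (induction cs)
      case Nil then show ?case by simp
    next
      case (Cons c cs)
      have c: "c div 2 \<in> Z" using Cons codes_div by auto
      have "mev hg (concat (map A (c # cs))) = mev hg (A c) * mev hg (concat (map A cs))"
        using mev_append[OF _ AZ gen] Cons.prems c Wp[OF c] by (auto simp: A_def)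
      also have "mev hg (A c) = (if even c then hg (c div 2) else inv (hg (c div 2)))"
        using c Wp[OF c] gen inH_r by (auto simp: A_def)
      finally show ?case using Cons by simp
    qed
    have "?\<rho> `` word_problem (*) e Z hg = loop_problem (Collect inH) (*) e Z hg"
    proof (rule set_eqI)
      fix v
      show "v \<in> ?\<rho> `` word_problem (*) e Z hg \<longleftrightarrow> v \<in> loop_problem (Collect inH) (*) e Z hg"
      proof
        assume "v \<in> ?\<rho> `` word_problem (*) e Z hg"
        then obtain u cs where u: "u \<in> word_problem (*) e Z hg" and cs: "set cs \<subseteq> codes Z"
          "u = concat (map A cs)" "v = concat (map (\<lambda>c. [c]) cs)" by blast
        then have "v = cs" using cm2 by auto
        then show "v \<in> loop_problem (Collect inH) (*) e Z hg" using u cs Aev unfolding LP WP by auto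
      next
        assume "v \<in> loop_problem (Collect inH) (*) e Z hg"
        then have v: "set v \<subseteq> codes Z" "gev hg v = e" unfolding LP by auto
        have "concat (map A v) \<in> word_problem (*) e Z hg"
          unfolding WP using v AZ Aev by auto
        moreover have "(concat (map A v), v) \<in> ?\<rho>" using v cm2 by auto
        ultimately show "v \<in> ?\<rho> `` word_problem (*) e Z hg" by blast
      qed
    qed
    then show "loop_problem (Collect inH) (*) e Z hg \<in> F"
      using apply_crt[OF F fin finite_codes[OF fin] W sub rt] by simp
  qed
qed

end

lemma grp_one_eq:
  assumes "(e::'a::semigroup_mult) \<in> H" "\<forall>h\<in>H. e * h = h \<and> h * e = h"
  shows "grp_one H = e"
  unfolding grp_one_def
proof (rule the_equality)
  show "e \<in> H \<and> (\<forall>h\<in>H. e * h = h \<and> h * e = h)" using assms by blast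
next
  fix e' assume "e' \<in> H \<and> (\<forall>h\<in>H. e' * h = h \<and> h * e' = h)"
  then have "e' * e = e" "e' * e = e'" using assms by auto
  then show "e' = e" by simp
qed

context csi begin

lemma H_sub: "is_subgroup (Collect inH)"
  unfolding is_subgroup_def
proof (intro conjI)
  show "\<forall>a\<in>Collect inH. \<forall>b\<in>Collect inH. a * b \<in> Collect inH" using inH_mult by auto
  show "\<exists>e'\<in>Collect inH. \<forall>h\<in>Collect inH. e' * h = h \<and> h * e' = h \<and> (\<exists>h'\<in>Collect inH. h * h' = e' \<and> h' * h = e')"
  proof (rule bexI[of _ e])
    show "e \<in> Collect inH" using inH_e by simp
    show "\<forall>h\<in>Collect inH. e * h = h \<and> h * e = h \<and> (\<exists>h'\<in>Collect inH. h * h' = e \<and> h' * h = e)"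
    proof
      fix h assume h: "h \<in> Collect inH"
      then have hh: "inH h" by simp
      have "inv h \<in> Collect inH \<and> h * inv h = e \<and> inv h * h = e" using inv_props[OF hh] by simp
      then show "e * h = h \<and> h * e = h \<and> (\<exists>h'\<in>Collect inH. h * h' = e \<and> h' * h = e)"
        using inH_l[OF hh] inH_r[OF hh] by blast
    qed
  qed
qed

lemma grp_one_H: "grp_one (Collect inH) = e"
  by (rule grp_one_eq) (auto simp: inH_e inH_l inH_r)

lemma H_max: "maximal_subgroup (Collect inH)"
  unfolding maximal_subgroup_def
proof (intro conjI allI impI H_sub)
  fix K assume K: "is_subgroup K \<and> Collect inH \<subseteq> K"
  then obtain e' where e': "e' \<in> K" "\<forall>h\<in>K. e' * h = h \<and> h * e' = h"
    unfolding is_subgroup_def by blast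
  have eK: "e \<in> K" using K inH_e by auto
  have "e = e'"
  proof (rule cs_primitive[OF cs])
    show "e' * e' = e'" using e' by blast
    show "e * e = e" by (rule idem)
    show "e' * e = e" "e * e' = e" using e' eK by auto
  qed
  then have "K \<subseteq> Collect inH" using e' unfolding inH_def by auto
  then show "K = Collect inH" using K by blast
qed

end

lemma max_sub_char:
  assumes cs: "completely_simple TYPE('a::semigroup_mult)" and m: "maximal_subgroup (H::'a set)"
  shows "csi (grp_one H) \<and> H = Collect (csi.inH (grp_one H))"
proof -
  from m have sg: "is_subgroup H" unfolding maximal_subgroup_def by blast
  then obtain e where e: "e \<in> H" "\<forall>h\<in>H. e * h = h \<and> h * e = h"
    unfolding is_subgroup_def by blast
  have g: "grp_one H = e" by (rule grp_one_eq[OF e])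
  have ee: "e * e = e" using e by blast
  interpret csi e using cs ee by unfold_locales
  have "H \<subseteq> Collect inH" using e unfolding inH_def by auto
  then have "Collect inH = H" using m H_sub unfolding maximal_subgroup_def by blast
  then show ?thesis using g csi_axioms by simp
qed

fun sp :: "(nat \<Rightarrow> 'a::semigroup_mult) \<Rightarrow> nat list \<Rightarrow> 'a" where
  "sp g [] = undefined"
| "sp g [x] = g x"
| "sp g (x # y # w) = g x * sp g (y # w)"

lemma sp_cons: "w \<noteq> [] \<Longrightarrow> sp g (x # w) = g x * sp g w"
  by (cases w) auto

lemma sp_append: "u \<noteq> [] \<Longrightarrow> v \<noteq> [] \<Longrightarrow> sp g (u @ v) = sp g u * sp g v"
proof (induction u)
  case Nil then show ?case by simp
next
  case (Cons x u)
  show ?case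
  proof (cases "u = []")
    case True then show ?thesis using Cons by (simp add: sp_cons)
  next
    case False then show ?thesis using Cons by (simp add: sp_cons mult.assoc)
  qed
qed

lemma sp_snoc: "w \<noteq> [] \<Longrightarrow> sp g (w @ [x]) = sp g w * g x"
  using sp_append[of w "[x]" g] by simp

lemma mon_eval_adj: "mon_eval adj_mult None (Some \<circ> g) w = (if w = [] then None else Some (sp g w))"
proof (induction w)
  case Nil then show ?case by (simp add: mon_eval_def)
next
  case (Cons x w)
  then show ?case by (cases "w = []") (auto simp: mon_eval_def sp_cons)
qed

lemma sg_gen_sp: "sg_generates X g \<Longrightarrow> \<exists>w. w \<noteq> [] \<and> set w \<subseteq> X \<and> sp g w = s"
  unfolding sg_generates_def mon_eval_adj by (metis option.distinct(1) option.inject)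

lemma two_odd_simps[simp]: "(2 * (x::nat) = Suc (2 * y)) = False" "(Suc (2 * x) = 2 * y) = False"
  "(2 * (x::nat) + 1) = Suc (2 * x)"
  by presburger+

lemma lp_nil_iff: "loop_path M mult X g a [] b \<longleftrightarrow> a \<in> M \<and> b = a"
  by (auto elim: loop_path.cases intro: loop_path.lp_nil)

lemma lp_fwd_iff: "loop_path M mult X g a (2 * x # w) b \<longleftrightarrow>
    a \<in> M \<and> x \<in> X \<and> loop_path M mult X g (mult a (g x)) w b"
proof
  assume "loop_path M mult X g a (2 * x # w) b"
  then show "a \<in> M \<and> x \<in> X \<and> loop_path M mult X g (mult a (g x)) w b"
    by (cases rule: loop_path.cases) auto
next
  assume "a \<in> M \<and> x \<in> X \<and> loop_path M mult X g (mult a (g x)) w b"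
  then show "loop_path M mult X g a (2 * x # w) b"
    using loop_path.lp_fwd[where a=a and x=x and w=w and b=b and M=M and mult=mult and X=X and g=g] by simp
qed

lemma lp_bwd_iff: "loop_path M mult X g a (Suc (2 * x) # w) b \<longleftrightarrow>
    a \<in> M \<and> x \<in> X \<and> (\<exists>c\<in>M. mult c (g x) = a \<and> loop_path M mult X g c w b)"
proof
  assume "loop_path M mult X g a (Suc (2 * x) # w) b"
  then show "a \<in> M \<and> x \<in> X \<and> (\<exists>c\<in>M. mult c (g x) = a \<and> loop_path M mult X g c w b)"
    by (cases rule: loop_path.cases) auto
next
  assume "a \<in> M \<and> x \<in> X \<and> (\<exists>c\<in>M. mult c (g x) = a \<and> loop_path M mult X g c w b)"
  then obtain c where "a \<in> M" "x \<in> X" "c \<in> M" "mult c (g x) = a" "loop_path M mult X g c w b" by blast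
  then show "loop_path M mult X g a (Suc (2 * x) # w) b"
    using loop_path.lp_bwd[where a=a and x=x and c=c and w=w and b=b and M=M and mult=mult and X=X and g=g] by simp
qed

definition fw :: "nat list \<Rightarrow> nat list" where "fw w = map (\<lambda>x. 2 * x) w"
definition rb :: "nat list \<Rightarrow> nat list" where "rb w = map (\<lambda>x. Suc (2 * x)) (rev w)"

lemma fw_simps[simp]: "fw [] = []" "fw (x # w) = 2 * x # fw w" "fw (u @ v) = fw u @ fw v"
  unfolding fw_def by auto
lemma rb_simps[simp]: "rb [] = []" "rb (w @ [x]) = Suc (2 * x) # rb w"
  unfolding rb_def by auto

lemma set_fw: "set w \<subseteq> X \<Longrightarrow> set (fw w) \<subseteq> codes X" unfolding fw_def by auto
lemma set_rb: "set w \<subseteq> X \<Longrightarrow> set (rb w) \<subseteq> codes X" unfolding rb_def by auto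

lemma adj_assoc: "adj_mult (adj_mult a b) c = adj_mult a (adj_mult b c)"
  by (cases a; cases b; cases c) (auto simp: mult.assoc)

abbreviation P1 :: "nat set \<Rightarrow> (nat \<Rightarrow> 'a::semigroup_mult) \<Rightarrow> 'a option \<Rightarrow> nat list \<Rightarrow> 'a option \<Rightarrow> bool" where
  "P1 X g \<equiv> loop_path UNIV adj_mult X (\<lambda>a. Some (g a))"

lemma fw_path: "P1 X g a (fw w) b \<longleftrightarrow> set w \<subseteq> X \<and> b = (if w = [] then a else adj_mult a (Some (sp g w)))"
proof (induction w arbitrary: a)
  case Nil then show ?case by (simp add: lp_nil_iff)
next
  case (Cons x w)
  have "P1 X g a (fw (x # w)) b \<longleftrightarrow> x \<in> X \<and> P1 X g (adj_mult a (Some (g x))) (fw w) b"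
    by (simp add: lp_fwd_iff)
  also have "\<dots> \<longleftrightarrow> x \<in> X \<and> set w \<subseteq> X \<and> b = (if w = [] then adj_mult a (Some (g x))
       else adj_mult (adj_mult a (Some (g x))) (Some (sp g w)))" by (simp only: Cons.IH)
  also have "\<dots> \<longleftrightarrow> set (x # w) \<subseteq> X \<and> b = adj_mult a (Some (sp g (x # w)))"
    by (cases "w = []") (auto simp: adj_assoc sp_cons)
  finally show ?case by simp
qed

lemma rb_path: "P1 X g a (rb w) None \<longleftrightarrow>
   (a = None \<and> w = []) \<or> (w \<noteq> [] \<and> set w \<subseteq> X \<and> a = Some (sp g w))"
proof (induction w arbitrary: a rule: rev_induct)
  case Nil then show ?case by (auto simp: lp_nil_iff)
next
  case (snoc x w)
  have "P1 X g a (rb (w @ [x])) None \<longleftrightarrow> x \<in> X \<and> (\<exists>c. adj_mult c (Some (g x)) = a \<and> P1 X g c (rb w) None)"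
    by (simp add: lp_bwd_iff)
  also have "\<dots> \<longleftrightarrow> x \<in> X \<and> (\<exists>c. adj_mult c (Some (g x)) = a \<and> ((c = None \<and> w = []) \<or> (w \<noteq> [] \<and> set w \<subseteq> X \<and> c = Some (sp g w))))"
    using snoc.IH by simp
  also have "\<dots> \<longleftrightarrow> (w @ [x] \<noteq> [] \<and> set (w @ [x]) \<subseteq> X \<and> a = Some (sp g (w @ [x])))"
    by (cases a; cases "w = []") (auto simp: sp_snoc)
  finally show ?case by auto
qed

definition Qset :: "nat set \<Rightarrow> (nat \<Rightarrow> 'a::semigroup_mult) \<Rightarrow> nat list set" where
  "Qset X g = {[2 * x] @ u @ [Suc (2 * y)] | x y u. x \<in> X \<and> y \<in> X \<and> loop_path UNIV (*) X g (g x) u (g y)}"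

lemma lift: "loop_path (UNIV::'a::semigroup_mult set) (*) X g s u t \<Longrightarrow> P1 X g (Some s) u (Some t)"
proof (induction rule: loop_path.induct)
  case (lp_nil a) then show ?case by (simp add: lp_nil_iff)
next
  case (lp_fwd a x w b) then show ?case by (simp add: lp_fwd_iff)
next
  case (lp_bwd a x c w b)
  then show ?case by (simp add: lp_bwd_iff) (rule exI[of _ "Some c"], simp)
qed

lemma decomp_path:
  "P1 X g a w b \<Longrightarrow> a = Some s \<Longrightarrow>
     (\<exists>t. b = Some t \<and> loop_path UNIV (*) X g s w t) \<or>
     (\<exists>w1 y w2. y \<in> X \<and> w = w1 @ Suc (2 * y) # w2 \<and> loop_path UNIV (*) X g s w1 (g y) \<and> P1 X g None w2 b)"
proof (induction arbitrary: s rule: loop_path.induct)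
  case (lp_nil a)
  then show ?case by (simp add: lp_nil_iff)
next
  case (lp_fwd a x w b)
  then have IH: "(\<exists>t. b = Some t \<and> loop_path UNIV (*) X g (s * g x) w t) \<or>
     (\<exists>w1 y w2. y \<in> X \<and> w = w1 @ Suc (2 * y) # w2 \<and> loop_path UNIV (*) X g (s * g x) w1 (g y) \<and> P1 X g None w2 b)"
    by simp
  then show ?case
  proof (elim disjE exE conjE)
    fix t assume "b = Some t" "loop_path UNIV (*) X g (s * g x) w t"
    then show ?thesis using lp_fwd by (intro disjI1) (simp add: lp_fwd_iff)
  next
    fix w1 y w2 assume "y \<in> X" "w = w1 @ Suc (2 * y) # w2" "loop_path UNIV (*) X g (s * g x) w1 (g y)" "P1 X g None w2 b"
    then show ?thesis using lp_fwd by (intro disjI2 exI[of _ "2 * x # w1"] exI[of _ y] exI[of _ w2]) (simp add: lp_fwd_iff)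
  qed
next
  case (lp_bwd a x c w b)
  show ?case
  proof (cases c)
    case None
    then have "s = g x" using lp_bwd by simp
    then show ?thesis using lp_bwd None
      by (intro disjI2 exI[of _ "[]"] exI[of _ x] exI[of _ w]) (simp add: lp_nil_iff)
  next
    case (Some c')
    then have cs: "c' * g x = s" using lp_bwd by simp
    from lp_bwd.IH[OF Some] show ?thesis
    proof (elim disjE exE conjE)
      fix t assume "b = Some t" "loop_path UNIV (*) X g c' w t"
      then show ?thesis using lp_bwd cs by (intro disjI1) (auto simp: lp_bwd_iff)
    next
      fix w1 y w2 assume "y \<in> X" "w = w1 @ Suc (2 * y) # w2" "loop_path UNIV (*) X g c' w1 (g y)" "P1 X g None w2 b"
      then show ?thesis using lp_bwd cs
        by (intro disjI2 exI[of _ "Suc (2 * x) # w1"] exI[of _ y] exI[of _ w2]) (auto simp: lp_bwd_iff)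
    qed
  qed
qed

lemma kleene_cons: assumes "q \<in> Q" "w \<in> kleene_star Q" shows "q @ w \<in> kleene_star Q"
proof -
  obtain ws where "w = concat ws" "set ws \<subseteq> Q" using assms(2) unfolding kleene_star_def by blast
  then have "q @ w = concat (q # ws) \<and> set (q # ws) \<subseteq> Q" using assms(1) by simp
  then show ?thesis unfolding kleene_star_def by blast
qed

lemma LS_eq: "loop_problem UNIV adj_mult None X (Some \<circ> g) = kleene_star (Qset X (g::nat \<Rightarrow> 'a::semigroup_mult))"
proof
  show "loop_problem UNIV adj_mult None X (Some \<circ> g) \<subseteq> kleene_star (Qset X g)"
  proof
    fix w assume "w \<in> loop_problem UNIV adj_mult None X (Some \<circ> g)"
    then have "P1 X g None w None" unfolding loop_problem_def comp_def by simp
    then show "w \<in> kleene_star (Qset X g)"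
    proof (induction "length w" arbitrary: w rule: less_induct)
      case less
      show ?case
      proof (cases w)
        case Nil then show ?thesis unfolding kleene_star_def by (auto intro: exI[of _ "[]"])
      next
        case (Cons c w')
        have c: "c \<in> codes X" using loop_path_codes[OF less.prems] Cons by auto
        from c show ?thesis
        proof (cases rule: codes_cases)
          case (1 x)
          then have P: "P1 X g (Some (g x)) w' None" and x: "x \<in> X"
            using less.prems Cons by (auto simp: lp_fwd_iff)
          from decomp_path[OF P refl] obtain w1 y w2 where d: "y \<in> X" "w' = w1 @ Suc (2 * y) # w2"
            "loop_path UNIV (*) X g (g x) w1 (g y)" "P1 X g None w2 None" by auto
          have k2: "w2 \<in> kleene_star (Qset X g)" using less.hyps[OF _ d(4)] Cons d(2) by simp
          have k1: "[2 * x] @ w1 @ [Suc (2 * y)] \<in> Qset X g" unfolding Qset_def using d x by blast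
          from k1 k2 have "([2 * x] @ w1 @ [Suc (2 * y)]) @ w2 \<in> kleene_star (Qset X g)" by (rule kleene_cons)
          then show ?thesis using Cons d(2) 1 by simp
        next
          case (2 x)
          then have "\<exists>c'. adj_mult c' (Some (g x)) = None" using less.prems Cons by (auto simp: lp_bwd_iff)
          then obtain c' where "adj_mult c' (Some (g x)) = None" by blast
          then show ?thesis by (cases c') auto
        qed
      qed
    qed
  qed
next
  show "kleene_star (Qset X g) \<subseteq> loop_problem UNIV adj_mult None X (Some \<circ> g)"
  proof
    fix w assume "w \<in> kleene_star (Qset X g)"
    then obtain ws where ws: "w = concat ws" "set ws \<subseteq> Qset X g" unfolding kleene_star_def by blast
    have q: "P1 X g None q None" if "q \<in> Qset X g" for q
    proof -
      from that obtain x y u where q: "q = [2 * x] @ u @ [Suc (2 * y)]" "x \<in> X" "y \<in> X"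
        "loop_path UNIV (*) X g (g x) u (g y)" unfolding Qset_def by blast
      have "P1 X g (Some (g x)) u (Some (g y))" using lift[OF q(4)] .
      moreover have "P1 X g (Some (g y)) [Suc (2 * y)] None"
        using q(3) by (auto simp: lp_bwd_iff lp_nil_iff intro!: bexI[of _ None])
      ultimately have "P1 X g (Some (g x)) (u @ [Suc (2 * y)]) None" by (rule loop_path_trans)
      then show ?thesis using q(1,2) by (simp add: lp_fwd_iff)
    qed
    have "set ws \<subseteq> Qset X g \<Longrightarrow> P1 X g None (concat ws) None"
    proof (induction ws)
      case Nil then show ?case by (simp add: lp_nil_iff)
    next
      case (Cons q ws) then show ?case using q loop_path_trans by fastforce
    qed
    then show "w \<in> loop_problem UNIV adj_mult None X (Some \<circ> g)"
      using ws unfolding loop_problem_def comp_def by simp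
  qed
qed

lemma tpath3_from2:
  "tpath E p u v r \<Longrightarrow> E = {(0::nat, P, [], 1::nat)} \<union> {(1, B z, [z], 1) | z. z \<in> Z} \<union> {(1, S, [], 2)}
   \<Longrightarrow> p = 2 \<Longrightarrow> u = [] \<and> v = [] \<and> r = 2"
  by (induction rule: tpath.induct) auto

lemma tpath3_from1:
  assumes "E = {(0::nat, P, [], 1::nat)} \<union> {(1, B z, [z], 1) | z. z \<in> Z} \<union> {(1, S, [], 2)}"
  shows "tpath E 1 u v 2 \<longleftrightarrow> (\<exists>zs. set zs \<subseteq> Z \<and> v = zs \<and> u = concat (map B zs) @ S)"
proof
  have "tpath E p u v r \<Longrightarrow> p = 1 \<Longrightarrow> r = 2 \<Longrightarrow> (\<exists>zs. set zs \<subseteq> Z \<and> v = zs \<and> u = concat (map B zs) @ S)" for p u v r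
  proof (induction rule: tpath.induct)
    case (tpath_nil q) then show ?case by simp
  next
    case (tpath_step p a b q u v r)
    from tpath_step.hyps(1) tpath_step.prems assms
    have "(\<exists>z. z \<in> Z \<and> a = B z \<and> b = [z] \<and> q = 1) \<or> (a = S \<and> b = [] \<and> q = 2)" by auto
    then show ?case
    proof (elim disjE exE conjE)
      fix z assume z: "z \<in> Z" "a = B z" "b = [z]" "q = 1"
      then obtain zs where "set zs \<subseteq> Z" "v = zs" "u = concat (map B zs) @ S"
        using tpath_step.IH tpath_step.prems by blast
      then show ?thesis using z by (intro exI[of _ "z # zs"]) auto
    next
      assume "a = S" "b = []" "q = 2"
      then show ?thesis using tpath3_from2[OF tpath_step.hyps(2) assms] by (intro exI[of _ "[]"]) auto
    qed
  qed
  then show "tpath E 1 u v 2 \<Longrightarrow> (\<exists>zs. set zs \<subseteq> Z \<and> v = zs \<and> u = concat (map B zs) @ S)" by blast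
next
  assume "\<exists>zs. set zs \<subseteq> Z \<and> v = zs \<and> u = concat (map B zs) @ S"
  then obtain zs where zs: "set zs \<subseteq> Z" "v = zs" "u = concat (map B zs) @ S" by blast
  have "tpath E 1 S [] 2" using assms tpath.tpath_step[OF _ tpath.tpath_nil, of 1 S "[]" 2 E] by auto
  then have "set zs \<subseteq> Z \<Longrightarrow> tpath E 1 (concat (map B zs) @ S) zs 2" for zs
  proof (induction zs)
    case Nil then show ?case by simp
  next
    case (Cons z zs)
    then have "tpath E 1 (concat (map B zs) @ S) zs 2" by simp
    moreover have "(1, B z, [z], 1) \<in> E" using assms Cons by auto
    ultimately show ?case using tpath.tpath_step[of 1 "B z" "[z]" 1 E] by fastforce
  qed
  then show "tpath E 1 u v 2" using zs by simp
qed

lemma tpath3: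
  assumes "E = {(0::nat, P, [], 1::nat)} \<union> {(1, B z, [z], 1) | z. z \<in> Z} \<union> {(1, S, [], 2)}"
  shows "tpath E 0 u v 2 \<longleftrightarrow> (\<exists>zs. set zs \<subseteq> Z \<and> v = zs \<and> u = P @ concat (map B zs) @ S)"
proof
  assume "tpath E 0 u v 2"
  then show "\<exists>zs. set zs \<subseteq> Z \<and> v = zs \<and> u = P @ concat (map B zs) @ S"
  proof (cases rule: tpath.cases)
    case (tpath_step a b q u' v')
    then have "a = P" "b = []" "q = 1" using assms by auto
    then show ?thesis using tpath_step tpath3_from1[OF assms] by auto
  qed simp
next
  assume "\<exists>zs. set zs \<subseteq> Z \<and> v = zs \<and> u = P @ concat (map B zs) @ S"
  then have "tpath E 1 (concat (map B v) @ S) v 2" "u = P @ concat (map B v) @ S"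
    using tpath3_from1[OF assms] by auto
  moreover have "(0, P, [], 1) \<in> E" using assms by auto
  ultimately show "tpath E 0 u v 2" using tpath.tpath_step[of 0 P "[]" 1 E] by fastforce
qed

lemma fw_concat: "fw (concat ws) = concat (map fw ws)"
  by (induction ws) auto

lemma list_preimage: "set ls \<subseteq> f ` Z \<Longrightarrow> \<exists>zs. set zs \<subseteq> Z \<and> ls = map f zs"
proof (induction ls)
  case Nil then show ?case by simp
next
  case (Cons l ls)
  then obtain z zs where "z \<in> Z" "l = f z" "set zs \<subseteq> Z" "ls = map f zs" by auto
  then show ?case by (intro exI[of _ "z # zs"]) auto
qed

context csi begin

lemma rho_sp: "w \<noteq> [] \<Longrightarrow> rho (sp g w) = rho (g (hd w))"
proof (induction w)
  case (Cons a w) then show ?case by (cases w) (auto simp: rho_mult)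
qed simp

lemma lam_sp: "w \<noteq> [] \<Longrightarrow> lam (sp g w) = lam (g (last w))"
proof (induction w)
  case (Cons a w) then show ?case by (cases w) (auto simp: lam_mult)
qed simp

lemma genprod:
  fixes g :: "nat \<Rightarrow> 'a"
  shows "w \<noteq> [] \<Longrightarrow> set w \<subseteq> X \<Longrightarrow> \<exists>ls. set ls \<subseteq> (\<lambda>x. e * g x * e) ` X \<union> (\<lambda>(x, y). lam (g x) * rho (g y)) ` (X \<times> X)
     \<and> foldr (*) ls e = e * sp g w * e"
proof (induction w)
  case Nil then show ?case by simp
next
  case (Cons x w)
  show ?case
  proof (cases "w = []")
    case True
    then show ?thesis using Cons.prems inH_r[OF inH_ese]
      by (intro exI[of _ "[e * g x * e]"]) auto
  next
    case False
    then obtain ls where ls: "set ls \<subseteq> (\<lambda>x. e * g x * e) ` X \<union> (\<lambda>(x, y). lam (g x) * rho (g y)) ` (X \<times> X)"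
      "foldr (*) ls e = e * sp g w * e" using Cons by auto
    have hw: "hd w \<in> X" using False Cons.prems by (cases w) auto
    have "e * sp g (x # w) * e = (e * g x * e) * (lam (g x) * rho (sp g w)) * (e * sp g w * e)"
      using ee_mult[of "g x" "sp g w"] False by (simp add: sp_cons)
    also have "\<dots> = foldr (*) ((e * g x * e) # (lam (g x) * rho (g (hd w))) # ls) e"
      using ls(2) rho_sp[OF False] by (simp add: mult.assoc)
    finally show ?thesis using ls(1) Cons.prems hw
      by (intro exI[of _ "(e * g x * e) # (lam (g x) * rho (g (hd w))) # ls"]) auto
  qed
qed

lemma sp_K:
  assumes hg: "\<forall>z\<in>Z. inH (hg z)" and vz: "\<forall>z\<in>Z. vw z \<noteq> [] \<and> sp g (vw z) = hg z"
    and ue: "ue \<noteq> []" "sp g ue = e"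
  shows "p \<noteq> [] \<Longrightarrow> sp g p * e = sp g p \<Longrightarrow> set zs \<subseteq> Z \<Longrightarrow>
     sp g (p @ concat (map (\<lambda>z. vw z @ ue) zs)) = sp g p * mev hg zs"
proof (induction zs arbitrary: p)
  case Nil then show ?case by simp
next
  case (Cons z zs)
  define p' where "p' = p @ vw z @ ue"
  have z: "z \<in> Z" using Cons by simp
  have sp': "sp g p' = sp g p * hg z"
    unfolding p'_def using Cons.prems vz z ue inH_r hg by (simp add: sp_append mult.assoc)
  have "sp g p' * e = sp g p'" using sp' inH_r hg z by (simp add: mult.assoc)
  moreover have "p' \<noteq> []" unfolding p'_def using Cons by simp
  ultimately have r: "sp g (p' @ concat (map (\<lambda>z. vw z @ ue) zs)) = sp g p' * mev hg zs"
    using Cons.IH Cons.prems by simp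
  have eq: "p @ concat (map (\<lambda>z. vw z @ ue) (z # zs)) = p' @ concat (map (\<lambda>z. vw z @ ue) zs)"
    unfolding p'_def by simp
  show ?case unfolding eq r sp' by (simp add: mult.assoc)
qed

lemma i_iii:
  fixes g :: "nat \<Rightarrow> 'a"
  assumes F: "closed_rat_trans F" and sg: "sg_generates X g"
    and L: "loop_problem UNIV adj_mult None X (Some \<circ> g) \<in> F"
  shows "\<exists>Z hg. mon_generates (Collect inH) (*) e Z hg \<and> word_problem (*) e Z hg \<in> F"
proof -
  have finX: "finite X" using sg unfolding sg_generates_def by blast
  define Gen where "Gen = (\<lambda>x. e * g x * e) ` X \<union> (\<lambda>(x, y). lam (g x) * rho (g y)) ` (X \<times> X)"
  have finG: "finite Gen" unfolding Gen_def using finX by simp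
  obtain gl where gl: "set gl = Gen" using finite_list[OF finG] by blast
  define Z where "Z = {..<length gl}"
  define hg where "hg i = gl ! i" for i
  have finZ: "finite Z" unfolding Z_def by simp
  have hgZ: "hg ` Z = Gen" unfolding Z_def hg_def gl[symmetric] by (auto simp: in_set_conv_nth)
  have GenH: "\<forall>x\<in>Gen. inH x" unfolding Gen_def using inH_ese inH_P by auto
  have hgH: "\<forall>z\<in>Z. inH (hg z)" using hgZ GenH by auto
  have mg: "mon_generates (Collect inH) (*) e Z hg"
    unfolding mon_generates_def
  proof (intro conjI ballI)
    show "finite Z" by (rule finZ)
    show "hg ` Z \<subseteq> Collect inH" using hgH by auto
  next
    fix m assume "m \<in> Collect inH"
    then have m: "e * m * e = m" unfolding inH_def by simp
    obtain w where w: "w \<noteq> []" "set w \<subseteq> X" "sp g w = m" using sg_gen_sp[OF sg] by blast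
    obtain ls where ls: "set ls \<subseteq> Gen" "foldr (*) ls e = m"
      using genprod[where g=g and X=X and w=w, OF w(1,2)] w(3) m unfolding Gen_def by auto
    obtain zs where zs: "set zs \<subseteq> Z" "ls = map hg zs" using list_preimage[of ls hg Z] ls(1) hgZ by auto
    have "mev hg zs = foldr (*) (map hg zs) e" unfolding mon_eval_def by (simp add: foldr_map comp_def)
    then show "\<exists>w. set w \<subseteq> Z \<and> mon_eval (*) e hg w = m" using zs ls by auto
  qed
  obtain ue where ue: "ue \<noteq> []" "set ue \<subseteq> X" "sp g ue = e" using sg_gen_sp[OF sg] by blast
  define vw where "vw z = (SOME w. w \<noteq> [] \<and> set w \<subseteq> X \<and> sp g w = hg z)" for z
  have vw: "vw z \<noteq> [] \<and> set (vw z) \<subseteq> X \<and> sp g (vw z) = hg z" for z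
    unfolding vw_def by (rule someI_ex) (rule sg_gen_sp[OF sg])
  define B where "B z = fw (vw z @ ue)" for z
  define E where "E = {(0::nat, fw ue, [], 1::nat)} \<union> {(1, B z, [z], 1) | z. z \<in> Z} \<union> {(1, rb ue, [], 2)}"
  let ?\<rho> = "{(u, v). \<exists>t \<in> {2}. tpath E 0 u v t}"
  have rt: "rational_transduction (codes X) Z ?\<rho>"
    unfolding rational_transduction_def
  proof (intro exI conjI)
    have "{(1::nat, B z, [z], 1::nat) | z. z \<in> Z} = (\<lambda>z. (1, B z, [z], 1)) ` Z" by auto
    then show "finite E" unfolding E_def using finZ by simp
    show "\<forall>(p, a, b, q) \<in> E. set a \<subseteq> codes X \<and> set b \<subseteq> Z"
    proof -
      have fz: "set (fw (vw z @ ue)) \<subseteq> codes X" for z by (rule set_fw) (use vw[of z] ue in auto)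
      show ?thesis unfolding E_def B_def using fz set_fw[OF ue(2)] set_rb[OF ue(2)] by (auto simp del: fw_simps)
    qed
  qed (rule refl)
  have sub: "loop_problem UNIV adj_mult None X (Some \<circ> g) \<subseteq> lists (codes X)"
  proof
    fix w assume "w \<in> loop_problem UNIV adj_mult None X (Some \<circ> g)"
    then have "set w \<subseteq> codes X" unfolding loop_problem_def by (auto dest!: loop_path_codes)
    then show "w \<in> lists (codes X)" by auto
  qed
  have key: "fw ue @ concat (map B zs) @ rb ue \<in> loop_problem UNIV adj_mult None X (Some \<circ> g)
      \<longleftrightarrow> mev hg zs = e" if zs: "set zs \<subseteq> Z" for zs
  proof -
    define pre where "pre = ue @ concat (map (\<lambda>z. vw z @ ue) zs)"
    have pre: "pre \<noteq> []" "set pre \<subseteq> X" unfolding pre_def using ue vw zs by auto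
    have fwpre: "fw pre = fw ue @ concat (map B zs)" unfolding pre_def B_def by (simp add: fw_concat comp_def)
    have sppre: "sp g pre = mev hg zs"
    proof -
      have "sp g pre = sp g ue * mev hg zs" unfolding pre_def
        by (rule sp_K[OF hgH _ ue(1,3)]) (use vw ue idem zs in auto)
      then show ?thesis using ue(3) inH_l[OF mev_inH[OF zs hgH]] by simp
    qed
    have "fw ue @ concat (map B zs) @ rb ue \<in> loop_problem UNIV adj_mult None X (Some \<circ> g)
       \<longleftrightarrow> P1 X g None (fw pre @ rb ue) None"
      unfolding loop_problem_def comp_def fwpre by simp
    also have "\<dots> \<longleftrightarrow> (\<exists>b. P1 X g None (fw pre) b \<and> P1 X g b (rb ue) None)"
      using loop_path_split loop_path_trans by metis
    also have "\<dots> \<longleftrightarrow> P1 X g (Some (sp g pre)) (rb ue) None"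
      using fw_path[of X g None pre] pre by auto
    also have "\<dots> \<longleftrightarrow> sp g pre = sp g ue" using rb_path[of X g _ ue] ue by auto
    finally show ?thesis using sppre ue(3) by simp
  qed
  have img: "?\<rho> `` loop_problem UNIV adj_mult None X (Some \<circ> g) = word_problem (*) e Z hg"
  proof (rule set_eqI)
    fix v
    have "v \<in> ?\<rho> `` loop_problem UNIV adj_mult None X (Some \<circ> g) \<longleftrightarrow>
       (\<exists>u. u \<in> loop_problem UNIV adj_mult None X (Some \<circ> g) \<and> tpath E 0 u v 2)" by auto
    also have "\<dots> \<longleftrightarrow> set v \<subseteq> Z \<and> fw ue @ concat (map B v) @ rb ue \<in> loop_problem UNIV adj_mult None X (Some \<circ> g)"
      using tpath3[OF E_def] by auto
    also have "\<dots> \<longleftrightarrow> v \<in> word_problem (*) e Z hg" unfolding word_problem_def using key by auto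
    finally show "v \<in> ?\<rho> `` loop_problem UNIV adj_mult None X (Some \<circ> g) \<longleftrightarrow> v \<in> word_problem (*) e Z hg" .
  qed
  have "word_problem (*) e Z hg \<in> F"
    using apply_crt[OF F finite_codes[OF finX] finZ L sub rt] img by simp
  then show ?thesis using mg by blast
qed

end

definition st :: "nat \<Rightarrow> nat \<Rightarrow> nat" where "st y z = 2 + prod_encode (y, z)"

lemma st_inj[simp]: "st a b = st c d \<longleftrightarrow> a = c \<and> b = d"
  unfolding st_def using prod_encode_eq by auto
lemma st_ne[simp]: "st a b \<noteq> 0" "st a b \<noteq> 1" "0 \<noteq> st a b" "1 \<noteq> st a b" "st a b \<noteq> Suc 0" "Suc 0 \<noteq> st a b"
  unfolding st_def by auto

locale iii_setup = csi e for e :: "'a::semigroup_mult" +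
  fixes X :: "nat set" and g :: "nat \<Rightarrow> 'a" and Z :: "nat set" and hg :: "nat \<Rightarrow> 'a"
  assumes sg: "sg_generates X g" and mg: "mon_generates (Collect inH) (*) e Z hg"
begin

lemma finX: "finite X" using sg unfolding sg_generates_def by blast
lemma finZ: "finite Z" using mg unfolding mon_generates_def by blast
lemma hgH: "\<forall>z\<in>Z. inH (hg z)" using mg unfolding mon_generates_def by auto

definition W :: "'a \<Rightarrow> nat list" where "W h = (SOME w. set w \<subseteq> Z \<and> mev hg w = h)"

lemma Wp: assumes "inH h" shows "set (W h) \<subseteq> Z" "mev hg (W h) = h"
proof -
  have "\<exists>w. set w \<subseteq> Z \<and> mev hg w = h" using mg assms unfolding mon_generates_def by auto
  then have "set (W h) \<subseteq> Z \<and> mev hg (W h) = h" unfolding W_def by (rule someI_ex)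
  then show "set (W h) \<subseteq> Z" "mev hg (W h) = h" by auto
qed

definition hx :: "nat \<Rightarrow> 'a" where "hx x = e * g x * e"
definition mm :: "nat \<Rightarrow> nat \<Rightarrow> 'a" where "mm z w = lam (g z) * rho (g w) * (e * g w * e)"

lemma hx_H: "inH (hx x)" unfolding hx_def by (rule inH_ese)
lemma mm_H: "inH (mm z w)" unfolding mm_def by (rule inH_mult[OF inH_P inH_ese])

definition E1 where "E1 = {(0::nat, W (hx x), [2 * x], st y x) | x y. x \<in> X \<and> y \<in> X \<and> rho (g x) = rho (g y)}"
definition E2 where "E2 = {(st y z, W (mm z w), [2 * w], st y w) | y z w. y \<in> X \<and> z \<in> X \<and> w \<in> X}"
definition E3 where "E3 = {(st y z, W (inv (mm z' w)), [Suc (2 * w)], st y z') | y z w z'.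
   y \<in> X \<and> z \<in> X \<and> w \<in> X \<and> z' \<in> X \<and> lam (g z) = lam (g w)}"
definition E4 where "E4 = {(st y z, W (inv (hx y)), [Suc (2 * y)], 1) | y z. y \<in> X \<and> z \<in> X \<and> lam (g z) = lam (g y)}"
definition E where "E = E1 \<union> E2 \<union> E3 \<union> E4"

lemma E_fin: "finite E"
proof -
  have "E1 \<subseteq> (\<lambda>(x, y). (0::nat, W (hx x), [2 * x], st y x)) ` (X \<times> X)" unfolding E1_def by (force simp: image_iff)
  moreover have "E2 \<subseteq> (\<lambda>(y, z, w). (st y z, W (mm z w), [2 * w], st y w)) ` (X \<times> X \<times> X)" unfolding E2_def by (force simp: image_iff)
  moreover have "E3 \<subseteq> (\<lambda>(y, z, w, z'). (st y z, W (inv (mm z' w)), [Suc (2 * w)], st y z')) ` (X \<times> X \<times> X \<times> X)"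
    unfolding E3_def by (force simp: image_iff)
  moreover have "E4 \<subseteq> (\<lambda>(y, z). (st y z, W (inv (hx y)), [Suc (2 * y)], 1::nat)) ` (X \<times> X)" unfolding E4_def by (force simp: image_iff)
  ultimately show ?thesis unfolding E_def using finX by (meson finite_SigmaI finite_Un finite_imageI finite_subset)
qed

lemma E_labels: "(p, a, b, q) \<in> E \<Longrightarrow> set a \<subseteq> Z \<and> set b \<subseteq> codes X"
  unfolding E_def E1_def E2_def E3_def E4_def
  using Wp(1)[OF hx_H] Wp(1)[OF mm_H] Wp(1)[OF inv_props(1)[OF mm_H]] Wp(1)[OF inv_props(1)[OF hx_H]]
  by (auto; blast)

lemma E_from_st: "(st y z, a, b, q) \<in> E \<Longrightarrow>
   (\<exists>w. w \<in> X \<and> a = W (mm z w) \<and> b = [2 * w] \<and> q = st y w) \<or>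
   (\<exists>w z'. w \<in> X \<and> z' \<in> X \<and> lam (g z) = lam (g w) \<and> a = W (inv (mm z' w)) \<and> b = [Suc (2 * w)] \<and> q = st y z') \<or>
   (a = W (inv (hx y)) \<and> b = [Suc (2 * y)] \<and> q = 1 \<and> lam (g z) = lam (g y))"
  unfolding E_def E1_def E2_def E3_def E4_def by auto

lemma E_from_0: "(0, a, b, q) \<in> E \<Longrightarrow>
   \<exists>x y. x \<in> X \<and> y \<in> X \<and> rho (g x) = rho (g y) \<and> a = W (hx x) \<and> b = [2 * x] \<and> q = st y x"
  unfolding E_def E1_def E2_def E3_def E4_def by auto

lemma E_from_1: "(1, a, b, q) \<notin> E" "(Suc 0, a, b, q) \<notin> E"
  unfolding E_def E1_def E2_def E3_def E4_def by auto

lemma tpath_from1: "tpath E p u v r \<Longrightarrow> p = 1 \<Longrightarrow> u = [] \<and> v = [] \<and> r = 1"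
  by (induction rule: tpath.induct) (auto simp: E_from_1)

lemma tpath_Z: "tpath E p u v r \<Longrightarrow> set u \<subseteq> Z"
  by (induction rule: tpath.induct) (auto dest: E_labels)

lemma constr: assumes "inH h"
  shows "rho (rho s * h * lam t) = rho s" "lam (rho s * h * lam t) = lam t" "e * (rho s * h * lam t) * e = h"
proof -
  have rr: "rho (rho s) = rho s" unfolding rho_def[of "rho s"] using e_rho[of s] idem inv_e rho_e by (simp add: mult.assoc)
  have ll: "lam (lam t) = lam t" unfolding lam_def[of "lam t"] using e_lam[of t] lam_e idem inv_e by (simp add: mult.assoc[symmetric])
  show "rho (rho s * h * lam t) = rho s" using rho_mult rr by simp
  show "lam (rho s * h * lam t) = lam t" using lam_mult ll by simp
  have "e * (rho s * h * lam t) * e = (e * rho s) * h * (lam t * e)" by (simp add: mult.assoc)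
  then show "e * (rho s * h * lam t) * e = h" using e_rho lam_e assms unfolding inH_def by simp
qed

lemma lam_gen: "\<exists>z\<in>X. lam c = lam (g z)"
proof -
  obtain w where w: "w \<noteq> []" "set w \<subseteq> X" "sp g w = c" using sg_gen_sp[OF sg] by blast
  then show ?thesis using lam_sp[OF w(1)] by (intro bexI[of _ "last w"]) auto
qed

abbreviation spath where "spath \<equiv> loop_path (UNIV::'a set) (*) X g"

lemma spath_rho: "spath s w t \<Longrightarrow> rho s = rho t"
  by (induction rule: loop_path.induct) (auto simp: rho_mult)

lemma mev_app: "set u \<subseteq> Z \<Longrightarrow> set v \<subseteq> Z \<Longrightarrow> mev hg (u @ v) = mev hg u * mev hg v"
  using mev_append hgH by blast

lemma sound:
  "tpath E p u v r \<Longrightarrow> r = 1 \<Longrightarrow> p = st y z \<Longrightarrow> y \<in> X \<Longrightarrow> z \<in> X \<Longrightarrow> lam s = lam (g z) \<Longrightarrow>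
   rho s = rho (g y) \<Longrightarrow> (e * s * e) * mev hg u = e \<Longrightarrow>
   \<exists>out. v = out @ [Suc (2 * y)] \<and> spath s out (g y)"
proof (induction arbitrary: y z s rule: tpath.induct)
  case (tpath_nil q) then show ?case by simp
next
  case (tpath_step p a b q u v r)
  have uZ: "set u \<subseteq> Z" using tpath_Z[OF tpath_step.hyps(2)] .
  from E_from_st[of y z a b q] tpath_step.hyps(1) tpath_step.prems(2)
  have cases: "(\<exists>w. w \<in> X \<and> a = W (mm z w) \<and> b = [2 * w] \<and> q = st y w) \<or>
   (\<exists>w z'. w \<in> X \<and> z' \<in> X \<and> lam (g z) = lam (g w) \<and> a = W (inv (mm z' w)) \<and> b = [Suc (2 * w)] \<and> q = st y z') \<or>
   (a = W (inv (hx y)) \<and> b = [Suc (2 * y)] \<and> q = 1 \<and> lam (g z) = lam (g y))" by simp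
  then show ?case
  proof (elim disjE exE conjE)
    fix w assume w: "w \<in> X" "a = W (mm z w)" "b = [2 * w]" "q = st y w"
    define s' where "s' = s * g w"
    have ma: "mev hg (a @ u) = mm z w * mev hg u"
      using mev_app[OF _ uZ] Wp[OF mm_H] w by simp
    have es': "e * s' * e = (e * s * e) * mm z w"
      unfolding s'_def mm_def using ee_mult[of s "g w"] tpath_step.prems by (simp add: mult.assoc)
    have "(e * s' * e) * mev hg u = e" using es' ma tpath_step.prems by (simp add: mult.assoc)
    moreover have "lam s' = lam (g w)" "rho s' = rho (g y)" unfolding s'_def using lam_mult rho_mult tpath_step.prems by auto
    ultimately obtain out where "v = out @ [Suc (2 * y)]" "spath s' out (g y)"
      using tpath_step.IH[of y w s'] tpath_step.prems w by auto
    then show ?thesis using w s'_def by (intro exI[of _ "2 * w # out"]) (simp add: lp_fwd_iff)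
  next
    fix w z' assume w: "w \<in> X" "z' \<in> X" "lam (g z) = lam (g w)" "a = W (inv (mm z' w))" "b = [Suc (2 * w)]" "q = st y z'"
    define h where "h = (e * s * e) * inv (mm z' w)"
    have hH: "inH h" unfolding h_def using inH_mult[OF inH_ese inv_props(1)[OF mm_H]] .
    define c where "c = rho s * h * lam (g z')"
    have c: "rho c = rho s" "lam c = lam (g z')" "e * c * e = h" unfolding c_def using constr[OF hH] by auto
    have "e * (c * g w) * e = (e * c * e) * (lam c * rho (g w)) * (e * g w * e)" by (rule ee_mult)
    also have "\<dots> = h * mm z' w" unfolding mm_def c(2) c(3) by (simp add: mult.assoc)
    also have "\<dots> = e * s * e" unfolding h_def using inv_props(3)[OF mm_H] inH_r[OF inH_ese]
      by (simp add: mult.assoc)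
    finally have cgw: "c * g w = s"
      using coord_eq[of "c * g w" s] rho_mult lam_mult c tpath_step.prems w by simp
    have ma: "mev hg (a @ u) = inv (mm z' w) * mev hg u"
      using mev_app[OF _ uZ] Wp[OF inv_props(1)[OF mm_H]] w by simp
    have "(e * c * e) * mev hg u = e" using c(3) ma tpath_step.prems unfolding h_def by (simp add: mult.assoc)
    then obtain out where "v = out @ [Suc (2 * y)]" "spath c out (g y)"
      using tpath_step.IH[of y z' c] tpath_step.prems w c by auto
    then show ?thesis using w cgw
      by (intro exI[of _ "Suc (2 * w) # out"]) (auto simp: lp_bwd_iff)
  next
    assume f: "a = W (inv (hx y))" "b = [Suc (2 * y)]" "q = 1" "lam (g z) = lam (g y)"
    have uv: "u = []" "v = []" using tpath_from1[OF tpath_step.hyps(2)] f by auto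
    have "mev hg (a @ u) = inv (hx y)" using uv f Wp[OF inv_props(1)[OF hx_H]] by simp
    then have "(e * s * e) * inv (hx y) = e" using tpath_step.prems by simp
    then have "(e * s * e) * (inv (hx y) * hx y) = e * hx y" by (simp add: mult.assoc[symmetric])
    then have "e * s * e = hx y" using inv_props(3)[OF hx_H] inH_r[OF inH_ese] inH_l[OF hx_H] by simp
    then have "s = g y" using coord_eq[of s "g y"] tpath_step.prems f unfolding hx_def by simp
    then show ?thesis using uv f by (intro exI[of _ "[]"]) (simp add: lp_nil_iff)
  qed
qed

lemma compl:
  "spath s w t \<Longrightarrow> t = g y \<Longrightarrow> y \<in> X \<Longrightarrow> z \<in> X \<Longrightarrow> lam (g z) = lam s \<Longrightarrow>
   \<exists>u. tpath E (st y z) u (w @ [Suc (2 * y)]) 1 \<and> (e * s * e) * mev hg u = e"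
proof (induction arbitrary: z rule: loop_path.induct)
  case (lp_nil a)
  define u where "u = W (inv (hx y))"
  have "(st y z, u, [Suc (2 * y)], 1) \<in> E" unfolding E_def E4_def u_def using lp_nil by auto
  then have "tpath E (st y z) u [Suc (2 * y)] 1" using tpath.tpath_step[OF _ tpath.tpath_nil] by fastforce
  moreover have "(e * a * e) * mev hg u = e" unfolding u_def using Wp[OF inv_props(1)[OF hx_H]] lp_nil
    inv_props(2)[OF hx_H] unfolding hx_def by simp
  ultimately show ?case by auto
next
  case (lp_fwd a x w b)
  obtain u' where u': "tpath E (st y x) u' (w @ [Suc (2 * y)]) 1" "(e * (a * g x) * e) * mev hg u' = e"
    using lp_fwd.IH[of x] lp_fwd.prems lp_fwd.hyps lam_mult by auto
  define u where "u = W (mm z x) @ u'"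
  have "(st y z, W (mm z x), [2 * x], st y x) \<in> E" unfolding E_def E2_def using lp_fwd by auto
  then have "tpath E (st y z) u ([2 * x] @ w @ [Suc (2 * y)]) 1" unfolding u_def
    using tpath.tpath_step[OF _ u'(1)] by blast
  moreover have "(e * a * e) * mev hg u = e"
  proof -
    have "mev hg u = mm z x * mev hg u'" unfolding u_def using mev_app[OF Wp(1)[OF mm_H] tpath_Z[OF u'(1)]] Wp(2)[OF mm_H] by simp
    moreover have "e * (a * g x) * e = (e * a * e) * mm z x"
      unfolding mm_def using ee_mult[of a "g x"] lp_fwd.prems by (simp add: mult.assoc)
    ultimately show ?thesis using u'(2) by (simp add: mult.assoc)
  qed
  ultimately show ?case by auto
next
  case (lp_bwd a x c w b)
  obtain z' where z': "z' \<in> X" "lam c = lam (g z')" using lam_gen by blast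
  obtain u' where u': "tpath E (st y z') u' (w @ [Suc (2 * y)]) 1" "(e * c * e) * mev hg u' = e"
    using lp_bwd.IH[of z'] lp_bwd.prems z' by auto
  define u where "u = W (inv (mm z' x)) @ u'"
  have "lam (g z) = lam (g x)" using lp_bwd.prems lp_bwd.hyps(4) lam_mult[of c "g x"] by simp
  then have "(st y z, W (inv (mm z' x)), [Suc (2 * x)], st y z') \<in> E" unfolding E_def E3_def using lp_bwd z' by auto
  then have "tpath E (st y z) u ([Suc (2 * x)] @ w @ [Suc (2 * y)]) 1" unfolding u_def
    using tpath.tpath_step[OF _ u'(1)] by blast
  moreover have "(e * a * e) * mev hg u = e"
  proof -
    have m: "mev hg u = inv (mm z' x) * mev hg u'" unfolding u_def
      using mev_app[OF Wp(1)[OF inv_props(1)[OF mm_H]] tpath_Z[OF u'(1)]] Wp(2)[OF inv_props(1)[OF mm_H]] by simp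
    have "e * a * e = (e * c * e) * mm z' x"
      unfolding mm_def using ee_mult[of c "g x"] lp_bwd.hyps z' by (simp add: mult.assoc)
    then have "(e * a * e) * inv (mm z' x) = (e * c * e) * (mm z' x * inv (mm z' x))" by (simp add: mult.assoc)
    also have "\<dots> = e * c * e" using inv_props(2)[OF mm_H] inH_r[OF inH_ese] by simp
    finally show ?thesis using m u'(2) by (simp add: mult.assoc[symmetric])
  qed
  ultimately show ?case by auto
qed

end

context iii_setup begin

lemma img: "{(u, v). \<exists>t\<in>{1}. tpath E 0 u v t} `` word_problem (*) e Z hg = Qset X g"
proof (rule set_eqI)
  fix q
  show "q \<in> {(u, v). \<exists>t\<in>{1}. tpath E 0 u v t} `` word_problem (*) e Z hg \<longleftrightarrow> q \<in> Qset X g"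
  proof
    assume "q \<in> {(u, v). \<exists>t\<in>{1}. tpath E 0 u v t} `` word_problem (*) e Z hg"
    then obtain u where u: "u \<in> word_problem (*) e Z hg" "tpath E 0 u q 1" by auto
    from u(2) show "q \<in> Qset X g"
    proof (cases rule: tpath.cases)
      case (tpath_step a b p u' v')
      obtain x y where xy: "x \<in> X" "y \<in> X" "rho (g x) = rho (g y)" "a = W (hx x)" "b = [2 * x]" "p = st y x"
        using E_from_0[OF tpath_step(3)] by blast
      have uZ: "set u' \<subseteq> Z" using tpath_Z[OF tpath_step(4)] .
      have "mev hg u = hx x * mev hg u'" using tpath_step xy mev_app[OF Wp(1)[OF hx_H] uZ] Wp(2)[OF hx_H] by simp
      then have "(e * g x * e) * mev hg u' = e" using u(1) unfolding word_problem_def hx_def by simp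
      then obtain out where "v' = out @ [Suc (2 * y)]" "spath (g x) out (g y)"
        using sound[OF tpath_step(4) refl xy(6) xy(2) xy(1) refl] xy(3) by auto
      then show ?thesis unfolding Qset_def using tpath_step xy by auto
    qed simp
  next
    assume "q \<in> Qset X g"
    then obtain x y w where q: "q = [2 * x] @ w @ [Suc (2 * y)]" "x \<in> X" "y \<in> X" "spath (g x) w (g y)"
      unfolding Qset_def by blast
    obtain u' where u': "tpath E (st y x) u' (w @ [Suc (2 * y)]) 1" "(e * g x * e) * mev hg u' = e"
      using compl[OF q(4) refl q(3) q(2) refl] by blast
    have e0: "(0, W (hx x), [2 * x], st y x) \<in> E" unfolding E_def E1_def using q spath_rho[OF q(4)] by auto
    have t: "tpath E 0 (W (hx x) @ u') q 1" using tpath.tpath_step[OF e0 u'(1)] q(1) by simp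
    have "mev hg (W (hx x) @ u') = e"
      using mev_app[OF Wp(1)[OF hx_H] tpath_Z[OF u'(1)]] Wp(2)[OF hx_H] u'(2) unfolding hx_def by simp
    then have "W (hx x) @ u' \<in> word_problem (*) e Z hg"
      unfolding word_problem_def using tpath_Z[OF t] by simp
    then show "q \<in> {(u, v). \<exists>t\<in>{1}. tpath E 0 u v t} `` word_problem (*) e Z hg" using t by blast
  qed
qed

lemma iii_i:
  assumes F: "closed_rat_trans F" and K: "closed_kleene F" and W: "word_problem (*) e Z hg \<in> F"
  shows "loop_problem UNIV adj_mult None X (Some \<circ> g) \<in> F"
proof -
  have rt: "rational_transduction Z (codes X) {(u, v). \<exists>t\<in>{1}. tpath E 0 u v t}"
    unfolding rational_transduction_def
  proof (intro exI[of _ E] exI[of _ 0] exI[of _ "{1}"] conjI)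
    show "finite E" by (rule E_fin)
    show "\<forall>(p, a, b, q)\<in>E. set a \<subseteq> Z \<and> set b \<subseteq> codes X" using E_labels by blast
  qed (rule refl)
  have sub: "word_problem (*) e Z hg \<subseteq> lists Z" unfolding word_problem_def by auto
  have "Qset X g \<in> F" using apply_crt[OF F finZ finite_codes[OF finX] W sub rt] img by simp
  then have "kleene_star (Qset X g) \<in> F" using K unfolding closed_kleene_def by blast
  then show ?thesis unfolding LS_eq[of X g] .
qed

end

theorem theorem5p6:
  fixes F :: "nat list set set"
  assumes "closed_rat_trans F"
    and "closed_kleene F"
    and "completely_simple TYPE('a::semigroup_mult)"
    and "finitely_generated TYPE('a)"
  shows "((\<exists>X (g :: nat \<Rightarrow> 'a). sg_generates X g \<and>
              loop_problem UNIV adj_mult None X (Some \<circ> g) \<in> F)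
          \<longleftrightarrow>
          (\<forall>H :: 'a set. maximal_subgroup H \<longrightarrow>
              (\<exists>X g. mon_generates H (*) (grp_one H) X g \<and>
                     loop_problem H (*) (grp_one H) X g \<in> F)))
       \<and> ((\<forall>H :: 'a set. maximal_subgroup H \<longrightarrow>
              (\<exists>X g. mon_generates H (*) (grp_one H) X g \<and>
                     loop_problem H (*) (grp_one H) X g \<in> F))
          \<longleftrightarrow>
          (\<forall>H :: 'a set. maximal_subgroup H \<longrightarrow>
              (\<exists>X g. mon_generates H (*) (grp_one H) X g \<and>
                     word_problem (*) (grp_one H) X g \<in> F)))"
proof -
  note F = assms(1) and K = assms(2) and cs = assms(3)
  have ii_iii_H: "(\<exists>X g. mon_generates H (*) (grp_one H) X g \<and> loop_problem H (*) (grp_one H) X g \<in> F)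
     \<longleftrightarrow> (\<exists>X g. mon_generates H (*) (grp_one H) X g \<and> word_problem (*) (grp_one H) X g \<in> F)"
    if m: "maximal_subgroup H" for H :: "'a set"
  proof -
    have c: "csi (grp_one H)" and Heq: "H = Collect (csi.inH (grp_one H))"
      using max_sub_char[OF cs m] by auto
    have "mon_generates H (*) (grp_one H) Z hg \<Longrightarrow>
       (loop_problem H (*) (grp_one H) Z hg \<in> F \<longleftrightarrow> word_problem (*) (grp_one H) Z hg \<in> F)" for Z hg
      using csi.ii_iii[OF c F, folded Heq] by blast
    then show ?thesis by blast
  qed
  have A: "(\<forall>H :: 'a set. maximal_subgroup H \<longrightarrow>
              (\<exists>X g. mon_generates H (*) (grp_one H) X g \<and> loop_problem H (*) (grp_one H) X g \<in> F))
          \<longleftrightarrow>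
          (\<forall>H :: 'a set. maximal_subgroup H \<longrightarrow>
              (\<exists>X g. mon_generates H (*) (grp_one H) X g \<and> word_problem (*) (grp_one H) X g \<in> F))"
    using ii_iii_H by blast
  have B: "(\<exists>X (g :: nat \<Rightarrow> 'a). sg_generates X g \<and> loop_problem UNIV adj_mult None X (Some \<circ> g) \<in> F)
     \<longleftrightarrow> (\<forall>H :: 'a set. maximal_subgroup H \<longrightarrow>
              (\<exists>X g. mon_generates H (*) (grp_one H) X g \<and> word_problem (*) (grp_one H) X g \<in> F))"
  proof
    assume "\<exists>X (g :: nat \<Rightarrow> 'a). sg_generates X g \<and> loop_problem UNIV adj_mult None X (Some \<circ> g) \<in> F"
    then obtain X and g :: "nat \<Rightarrow> 'a" where sg: "sg_generates X g"
      and L: "loop_problem UNIV adj_mult None X (Some \<circ> g) \<in> F" by blast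
    show "\<forall>H :: 'a set. maximal_subgroup H \<longrightarrow>
              (\<exists>X g. mon_generates H (*) (grp_one H) X g \<and> word_problem (*) (grp_one H) X g \<in> F)"
    proof (intro allI impI)
      fix H :: "'a set" assume m: "maximal_subgroup H"
      have c: "csi (grp_one H)" and Heq: "H = Collect (csi.inH (grp_one H))"
        using max_sub_char[OF cs m] by auto
      show "\<exists>X g. mon_generates H (*) (grp_one H) X g \<and> word_problem (*) (grp_one H) X g \<in> F"
        using csi.i_iii[OF c F sg L, folded Heq] by blast
    qed
  next
    assume R: "\<forall>H :: 'a set. maximal_subgroup H \<longrightarrow>
              (\<exists>X g. mon_generates H (*) (grp_one H) X g \<and> word_problem (*) (grp_one H) X g \<in> F)"
    obtain e0 :: 'a where "primitive_idempotent e0" using cs unfolding completely_simple_def by blast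
    then have ee: "e0 * e0 = e0" unfolding primitive_idempotent_def by blast
    interpret c0: csi e0 using cs ee by unfold_locales
    have m: "maximal_subgroup (Collect c0.inH)" by (rule c0.H_max)
    obtain Z hg where mg: "mon_generates (Collect c0.inH) (*) e0 Z hg" and W: "word_problem (*) e0 Z hg \<in> F"
      using R[rule_format, OF m] unfolding c0.grp_one_H by blast
    obtain X and g :: "nat \<Rightarrow> 'a" where sg: "sg_generates X g"
      using assms(4) unfolding finitely_generated_def by blast
    interpret s: iii_setup e0 X g Z hg using sg mg by unfold_locales
    have "loop_problem UNIV adj_mult None X (Some \<circ> g) \<in> F" by (rule s.iii_i[OF F K W])
    then show "\<exists>X (g :: nat \<Rightarrow> 'a). sg_generates X g \<and> loop_problem UNIV adj_mult None X (Some \<circ> g) \<in> F"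
      using sg by blast
  qed
  show ?thesis using A B by blast
qed

end
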